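(* Assume the setting and algorithm described in the context. If $0<\alpha\le\frac{\sqrt n}{\sqrt{8m}\,L}$, then for all $k\ge0$, almost surely, $$\mathbb E\big[t^{k+1}\,|\,\mathcal F^k\big]\le 2t^k+3\alpha^2\|\overline{\nabla\mathbf f}(x^k)\|^2+\frac{9}{4mn}\|x^k-Jx^k\|^2 .$$
   Context: Setting. Let $n,m,p\ge1$ be integers and $\mathcal V=\{1,\dots,n\}$. For each $i\in\mathcal V$ and $j\in\{1,\dots,m\}$, $f_{i,j}:\mathbb R^p\to\mathbb R$ is differentiable and $L$-smooth for some $L>0$, i.e. $\|\nabla f_{i,j}(x)-\nabla f_{i,j}(y)\|\le L\|x-y\|$ for all $x,y\in\mathbb R^p$. Let $f_i:=\frac1m\sum_{j=1}^m f_{i,j}$ and $F:=\frac1n\sum_{i=1}^n f_i$, and assume $F^*:=\inf_{x\in\mathbb R^p}F(x)>-\infty$. Let $\underline W=(\underline w_{ir})\in\mathbb R^{n\times n}$ be a nonnegative, primitive, doubly stochastic matrix ($\underline W\mathbf 1_n=\mathbf 1_n$, $\mathbf 1_n^\top\underline W=\mathbf 1_n^\top$), and let $\lambda\in[0,1)$ be its second largest singular value. Any expression with $\lambda$ in a denominator is read as $+\infty$ when $\lambda=0$. Algorithm GT-SAGA with step-size $\alpha>0$: fix a deterministic $\bar x^0\in\mathbb R^p$; for all $i\in\mathcal V$ set $x_i^0=\bar x^0$, $z_{i,j}^0=x_i^0$ for all $j$, $y_i^0=0$, $g_i^{-1}=0$. For $k=0,1,2,\dots$ and every $i\in\mathcal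 V$: draw $\tau_i^k$ uniformly from $\{1,\dots,m\}$; set $g_i^k=\nabla f_{i,\tau_i^k}(x_i^k)-\nabla f_{i,\tau_i^k}(z_{i,\tau_i^k}^k)+\frac1m\sum_{j=1}^m\nabla f_{i,j}(z_{i,j}^k)$; set $y_i^{k+1}=\sum_{r=1}^n\underline w_{ir}(y_r^k+g_r^k-g_r^{k-1})$; set $x_i^{k+1}=\sum_{r=1}^n\underline w_{ir}(x_r^k-\alpha y_r^{k+1})$; draw $s_i^k$ uniformly from $\{1,\dots,m\}$; set $z_{i,j}^{k+1}=x_i^k$ if $j=s_i^k$ and $z_{i,j}^{k+1}=z_{i,j}^k$ otherwise. The family $\{\tau_i^k,s_i^k: i\in\mathcal V,k\ge0\}$ is independent. Notation. $x^k,y^k,g^k\in\mathbb R^{np}$ stack the $x_i^k$, $y_i^k$, $g_i^k$; $\nabla\mathbf f(x^k)\in\mathbb R^{np}$ stacks $\nabla f_i(x_i^k)$, $i=1,\dots,n$; $W=\underline W\otimes I_p$, $J=(\frac1n\mathbf 1_n\mathbf 1_n^\top)\otimes I_p$; $\bar x^k=\frac1n\sum_i x_i^k$, $\bar g^k=\frac1n\sum_i g_i^k$, $\overline{\nabla\mathbf f}(x^k)=\frac1n\sum_i\nabla f_i(x_i^k)$. $\mathcal F^0$ is the trivial $\sigma$-algebra and $\mathcal F^k=\sigma(\{\tau_i^t,s_i^t:i\in\mathcal V,\ t\le k-1\})$ for $k\ge1$. $t^k:=\frac1n\sum_{i=1}^n\frac1m\sum_{j=1}^m\|\bar x^k-z_{i,j}^k\|^2$.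 $\|\nabla\mathbf f(x^0)\|^2:=\sum_{i=1}^n\|\nabla f_i(\bar x^0)\|^2$. Norms are Euclidean (spectral for matrices); vector and matrix inequalities are entrywise. *)

theory Defs
  imports "HOL-Probability.Probability"
begin

(* Agents are indexed by {..<n}, component functions by {..<m} (0-based). *)

fun matpow :: "nat \<Rightarrow> (nat \<Rightarrow> nat \<Rightarrow> real) \<Rightarrow> nat \<Rightarrow> nat \<Rightarrow> nat \<Rightarrow> real" where
  "matpow n W 0 i j = (if i = j then 1 else 0)"
| "matpow n W (Suc k) i j = (\<Sum>r<n. matpow n W k i r * W r j)"

definition primitive_mat :: "nat \<Rightarrow> (nat \<Rightarrow> nat \<Rightarrow> real) \<Rightarrow> bool" where
  "primitive_mat n W \<longleftrightarrow> (\<exists>k. \<forall>i<n. \<forall>j<n. matpow n W k i j > 0)"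

definition doubly_stochastic :: "nat \<Rightarrow> (nat \<Rightarrow> nat \<Rightarrow> real) \<Rightarrow> bool" where
  "doubly_stochastic n W \<longleftrightarrow> (\<forall>i<n. (\<Sum>r<n. W i r) = 1) \<and> (\<forall>r<n. (\<Sum>i<n. W i r) = 1)"

definition saga_g ::
  "nat \<Rightarrow> (nat \<Rightarrow> nat \<Rightarrow> 'v \<Rightarrow> 'v::real_vector) \<Rightarrow> nat \<Rightarrow> (nat \<Rightarrow> 'v) \<Rightarrow> (nat \<Rightarrow> nat \<Rightarrow> 'v) \<Rightarrow> nat \<Rightarrow> 'v" where
  "saga_g m G tau x z i =
     G i tau (x i) - G i tau (z i tau) + (1 / real m) *\<^sub>R (\<Sum>j<m. G i j (z i j))"

text \<open>State of GT-SAGA at iteration k along a sample path (tau k i, s k i):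
  (x^k, y^k, g^{k-1}, z^k).\<close>
fun gtsaga ::
  "nat \<Rightarrow> nat \<Rightarrow> (nat \<Rightarrow> nat \<Rightarrow> real) \<Rightarrow> (nat \<Rightarrow> nat \<Rightarrow> 'v \<Rightarrow> 'v::real_vector) \<Rightarrow> real \<Rightarrow> 'v
   \<Rightarrow> (nat \<Rightarrow> nat \<Rightarrow> nat) \<Rightarrow> (nat \<Rightarrow> nat \<Rightarrow> nat) \<Rightarrow> nat
   \<Rightarrow> (nat \<Rightarrow> 'v) \<times> (nat \<Rightarrow> 'v) \<times> (nat \<Rightarrow> 'v) \<times> (nat \<Rightarrow> nat \<Rightarrow> 'v)" where
  "gtsaga n m W G \<alpha> x0 tau s 0 = ((\<lambda>i. x0), (\<lambda>i. 0), (\<lambda>i. 0), (\<lambda>i j. x0))"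
| "gtsaga n m W G \<alpha> x0 tau s (Suc k) =
     (case gtsaga n m W G \<alpha> x0 tau s k of (x, y, gp, z) \<Rightarrow>
       let g = (\<lambda>i. saga_g m G (tau k i) x z i);
           y' = (\<lambda>i. \<Sum>r<n. W i r *\<^sub>R (y r + g r - gp r));
           x' = (\<lambda>i. \<Sum>r<n. W i r *\<^sub>R (x r - \<alpha> *\<^sub>R y' r));
           z' = (\<lambda>i j. if j = s k i then x i else z i j)
       in (x', y', g, z'))"

definition gt_x where "gt_x n m W G \<alpha> x0 tau s k = fst (gtsaga n m W G \<alpha> x0 tau s k)"
definition gt_z where "gt_z n m W G \<alpha> x0 tau s k = snd (snd (snd (gtsaga n m W G \<alpha> x0 tau s k)))"

definition avg :: "nat \<Rightarrow> (nat \<Rightarrow> 'v::real_vector) \<Rightarrow> 'v" where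
  "avg n v = (1 / real n) *\<^sub>R (\<Sum>i<n. v i)"

definition gt_t where
  "gt_t n m W G \<alpha> x0 tau s k =
     (let x = gt_x n m W G \<alpha> x0 tau s k; z = gt_z n m W G \<alpha> x0 tau s k
      in (1 / real n) * (\<Sum>i<n. (1 / real m) * (\<Sum>j<m. (norm (avg n x - z i j))\<^sup>2)))"

text \<open>||x - Jx||^2 = sum_i ||x_i - xbar||^2\<close>
definition consensus_err :: "nat \<Rightarrow> (nat \<Rightarrow> 'v::real_normed_vector) \<Rightarrow> real" where
  "consensus_err n x = (\<Sum>i<n. (norm (x i - avg n x))\<^sup>2)"

definition avg_grad :: "nat \<Rightarrow> nat \<Rightarrow> (nat \<Rightarrow> nat \<Rightarrow> 'v \<Rightarrow> 'v::real_vector) \<Rightarrow> (nat \<Rightarrow> 'v) \<Rightarrow> 'v" where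
  "avg_grad n m G x = avg n (\<lambda>i. (1 / real m) *\<^sub>R (\<Sum>j<m. G i j (x i)))"

definition filt :: "'w measure \<Rightarrow> nat \<Rightarrow> (nat \<Rightarrow> nat \<Rightarrow> 'w \<Rightarrow> nat) \<Rightarrow> (nat \<Rightarrow> nat \<Rightarrow> 'w \<Rightarrow> nat) \<Rightarrow> nat \<Rightarrow> 'w measure" where
  "filt M n tau s k = sigma (space M)
     {X -` A \<inter> space M | X A. \<exists>t i. t < k \<and> i < n \<and> (X = tau t i \<or> X = s t i)}"

end

theory Submission
  imports Defs
begin


lemma sum_PiE_single:
  fixes h :: "'b \<Rightarrow> real"
  assumes I: "finite I" "i \<in> I" and J: "finite J"
  shows "(\<Sum>g\<in>PiE I (\<lambda>_. J). h (g i)) = real (card J) ^ (card I - 1) * (\<Sum>a\<in>J. h a)"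
proof -
  have "(\<Prod>x\<in>I. \<Sum>y\<in>J. (if x = i then h y else 1)) = (\<Sum>g\<in>PiE I (\<lambda>_. J). \<Prod>x\<in>I. (if x = i then h (g x) else 1))"
    using prod_sum_PiE[OF I(1), of "\<lambda>_. J" "\<lambda>x y. if x = i then h y else 1"] J by simp
  also have "\<dots> = (\<Sum>g\<in>PiE I (\<lambda>_. J). h (g i))"
    using I by (simp add: prod.If_cases Int_absorb1)
  also have "(\<Prod>x\<in>I. \<Sum>y\<in>J. (if x = i then h y else 1)) = (\<Prod>x\<in>I. if x = i then (\<Sum>y\<in>J. h y) else real (card J))"
    by (intro prod.cong) auto
  also have "\<dots> = real (card J) ^ (card I - 1) * (\<Sum>a\<in>J. h a)"
  proof -
    have "I \<inter> - {i} = I - {i}" by auto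
    then show ?thesis using I by (simp add: prod.If_cases Int_absorb1 card_Diff_singleton)
  qed
  finally show ?thesis by simp
qed

lemma sum_PiE_pair:
  fixes h :: "'b \<Rightarrow> 'b \<Rightarrow> real"
  assumes I: "finite I" "i \<in> I" "l \<in> I" "i \<noteq> l" and J: "finite J"
  shows "(\<Sum>g\<in>PiE I (\<lambda>_. J). h (g i) (g l)) = real (card J) ^ (card I - 2) * (\<Sum>a\<in>J. \<Sum>b\<in>J. h a b)"
proof -
  have cnt: "(\<Sum>g\<in>PiE I (\<lambda>_. J). (if g i = a then 1 else 0) * (if g l = b then 1 else 0)) = real (card J) ^ (card I - 2)"
    if ab: "a \<in> J" "b \<in> J" for a b
  proof -
    let ?f = "\<lambda>x y. if x = i then (if y = a then 1 else 0) else if x = l then (if y = b then 1 else 0) else (1::real)"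
    have "(\<Prod>x\<in>I. \<Sum>y\<in>J. ?f x y) = (\<Sum>g\<in>PiE I (\<lambda>_. J). \<Prod>x\<in>I. ?f x (g x))"
      using prod_sum_PiE[OF I(1), of "\<lambda>_. J" ?f] J by simp
    also have "\<dots> = (\<Sum>g\<in>PiE I (\<lambda>_. J). (if g i = a then 1 else 0) * (if g l = b then 1 else 0))"
    proof (intro sum.cong refl)
      fix g
      have "(\<Prod>x\<in>I. ?f x (g x)) = ?f i (g i) * (\<Prod>x\<in>I-{i}. ?f x (g x))"
        using I by (simp add: prod.remove)
      also have "(\<Prod>x\<in>I-{i}. ?f x (g x)) = ?f l (g l) * (\<Prod>x\<in>I-{i}-{l}. ?f x (g x))"
        using I by (simp add: prod.remove)
      also have "(\<Prod>x\<in>I-{i}-{l}. ?f x (g x)) = 1" by (intro prod.neutral) auto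
      finally show "(\<Prod>x\<in>I. ?f x (g x)) = (if g i = a then 1 else 0) * (if g l = b then 1 else 0)"
        using I by simp
    qed
    also have "(\<Prod>x\<in>I. \<Sum>y\<in>J. ?f x y) = (\<Prod>x\<in>I. if x = i then 1 else if x = l then 1 else real (card J))"
      using ab J by (intro prod.cong) (auto simp: sum.delta)
    also have "\<dots> = (\<Prod>x\<in>I-{i}-{l}. real (card J))"
    proof -
      let ?F = "\<lambda>x. if x = i then 1 else if x = l then 1 else real (card J)"
      have "(\<Prod>x\<in>I. ?F x) = ?F i * (\<Prod>x\<in>I-{i}. ?F x)"
        using I by (intro prod.remove)
      also have "(\<Prod>x\<in>I-{i}. ?F x) = ?F l * (\<Prod>x\<in>I-{i}-{l}. ?F x)"
        using I by (intro prod.remove) auto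
      finally have "(\<Prod>x\<in>I. ?F x) = (\<Prod>x\<in>I-{i}-{l}. ?F x)" using I by simp
      also have "\<dots> = (\<Prod>x\<in>I-{i}-{l}. real (card J))" by (intro prod.cong) auto
      finally show ?thesis .
    qed
    also have "\<dots> = real (card J) ^ (card I - 2)"
    proof -
      have "card (I-{i}-{l}) = card I - 2" using I by (simp add: card_Diff_singleton)
      then show ?thesis by simp
    qed
    finally show ?thesis by simp
  qed
  have "(\<Sum>g\<in>PiE I (\<lambda>_. J). h (g i) (g l)) =
        (\<Sum>g\<in>PiE I (\<lambda>_. J). \<Sum>a\<in>J. \<Sum>b\<in>J. (if g i = a then 1 else 0) * (if g l = b then 1 else 0) * h a b)"
  proof (intro sum.cong refl)
    fix g assume g: "g \<in> PiE I (\<lambda>_. J)"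
    then have "g i \<in> J" "g l \<in> J" using I by auto
    then show "h (g i) (g l) = (\<Sum>a\<in>J. \<Sum>b\<in>J. (if g i = a then 1 else 0) * (if g l = b then 1 else 0) * h a b)"
    proof -
      have e: "\<And>a b. (if g i = a then 1 else 0) * (if g l = b then 1 else 0) * h a b = (if b = g l then (if a = g i then h a b else 0) else (0::real))"
        by auto
      show ?thesis unfolding e using J \<open>g i \<in> J\<close> \<open>g l \<in> J\<close> by (simp add: sum.delta)
    qed
  qed
  also have "\<dots> = (\<Sum>a\<in>J. \<Sum>b\<in>J. (\<Sum>g\<in>PiE I (\<lambda>_. J). (if g i = a then 1 else 0) * (if g l = b then 1 else 0)) * h a b)"
    by (simp add: sum.swap[of _ "PiE I (\<lambda>_. J)"] sum_distrib_right)
  also have "\<dots> = (\<Sum>a\<in>J. \<Sum>b\<in>J. real (card J) ^ (card I - 2) * h a b)"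
    by (intro sum.cong refl) (simp add: cnt)
  also have "\<dots> = real (card J) ^ (card I - 2) * (\<Sum>a\<in>J. \<Sum>b\<in>J. h a b)"
    by (simp add: sum_distrib_left)
  finally show ?thesis .
qed


lemma var_PiE:
  fixes d :: "nat \<Rightarrow> nat \<Rightarrow> 'v::real_inner" and u :: 'v and \<beta> :: real
  assumes z: "\<And>i. i < n \<Longrightarrow> (\<Sum>a<m. d i a) = 0"
  shows "(\<Sum>\<tau>\<in>PiE {..<n} (\<lambda>_. {..<m}). (norm (u - \<beta> *\<^sub>R (\<Sum>i<n. d i (\<tau> i))))\<^sup>2)
     = real m ^ n * (norm u)\<^sup>2 + \<beta>\<^sup>2 * real m ^ (n - 1) * (\<Sum>i<n. \<Sum>a<m. (norm (d i a))\<^sup>2)"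
proof -
  let ?P = "PiE {..<n} (\<lambda>_. {..<m})"
  let ?v = "\<lambda>\<tau>. \<Sum>i<n. d i (\<tau> i)"
  have cardP: "card ?P = m ^ n" by (simp add: card_PiE)
  have expand: "(norm (u - \<beta> *\<^sub>R ?v \<tau>))\<^sup>2 = (norm u)\<^sup>2 - 2 * \<beta> * inner u (?v \<tau>) + \<beta>\<^sup>2 * inner (?v \<tau>) (?v \<tau>)" for \<tau>
    unfolding power2_norm_eq_inner by (simp add: inner_diff_left inner_diff_right inner_commute power2_eq_square algebra_simps)
  have lin: "(\<Sum>\<tau>\<in>?P. inner u (?v \<tau>)) = 0"
  proof -
    have "(\<Sum>\<tau>\<in>?P. inner u (?v \<tau>)) = (\<Sum>i<n. \<Sum>\<tau>\<in>?P. inner u (d i (\<tau> i)))"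
      by (simp add: inner_sum_right sum.swap[of _ ?P])
    also have "\<dots> = (\<Sum>i<n. real m ^ (n - 1) * (\<Sum>a<m. inner u (d i a)))"
      by (intro sum.cong refl) (use sum_PiE_single[of "{..<n}" _ "{..<m}"] in simp)
    also have "\<dots> = 0"
      by (intro sum.neutral ballI) (simp add: inner_sum_right[symmetric] z)
    finally show ?thesis .
  qed
  have quad: "(\<Sum>\<tau>\<in>?P. inner (?v \<tau>) (?v \<tau>)) = real m ^ (n - 1) * (\<Sum>i<n. \<Sum>a<m. (norm (d i a))\<^sup>2)"
  proof -
    have "(\<Sum>\<tau>\<in>?P. inner (?v \<tau>) (?v \<tau>)) = (\<Sum>i<n. \<Sum>l<n. \<Sum>\<tau>\<in>?P. inner (d i (\<tau> i)) (d l (\<tau> l)))"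
      by (simp add: inner_sum_right inner_sum_left sum.swap[of _ ?P]) (rule sum.cong[OF refl], rule sum.swap)
    also have "\<dots> = (\<Sum>i<n. real m ^ (n - 1) * (\<Sum>a<m. (norm (d i a))\<^sup>2))"
    proof (intro sum.cong refl)
      fix i assume i: "i \<in> {..<n}"
      have off: "(\<Sum>\<tau>\<in>?P. inner (d i (\<tau> i)) (d l (\<tau> l))) = 0" if l: "l \<in> {..<n} - {i}" for l
      proof -
        have "(\<Sum>\<tau>\<in>?P. inner (d i (\<tau> i)) (d l (\<tau> l))) = real m ^ (n - 2) * (\<Sum>a<m. \<Sum>b<m. inner (d i a) (d l b))"
          using i l sum_PiE_pair[of "{..<n}" i l "{..<m}" "\<lambda>a b. inner (d i a) (d l b)"] by simp
        also have "(\<Sum>a<m. \<Sum>b<m. inner (d i a) (d l b)) = inner (\<Sum>a<m. d i a) (\<Sum>b<m. d l b)"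
          by (simp add: inner_sum_left inner_sum_right) (rule sum.swap)
        also have "\<dots> = 0" using z i by simp
        finally show ?thesis by simp
      qed
      have "(\<Sum>l<n. \<Sum>\<tau>\<in>?P. inner (d i (\<tau> i)) (d l (\<tau> l))) =
            (\<Sum>\<tau>\<in>?P. inner (d i (\<tau> i)) (d i (\<tau> i))) + (\<Sum>l\<in>{..<n}-{i}. \<Sum>\<tau>\<in>?P. inner (d i (\<tau> i)) (d l (\<tau> l)))"
        using i by (simp add: sum.remove)
      also have "(\<Sum>l\<in>{..<n}-{i}. \<Sum>\<tau>\<in>?P. inner (d i (\<tau> i)) (d l (\<tau> l))) = 0"
        using off by (intro sum.neutral) auto
      also have "(\<Sum>\<tau>\<in>?P. inner (d i (\<tau> i)) (d i (\<tau> i))) = real m ^ (n - 1) * (\<Sum>a<m. (norm (d i a))\<^sup>2)"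
        using i sum_PiE_single[of "{..<n}" i "{..<m}" "\<lambda>a. inner (d i a) (d i a)"] by (simp add: power2_norm_eq_inner)
      finally show "(\<Sum>l<n. \<Sum>\<tau>\<in>?P. inner (d i (\<tau> i)) (d l (\<tau> l))) = real m ^ (n - 1) * (\<Sum>a<m. (norm (d i a))\<^sup>2)" by simp
    qed
    also have "\<dots> = real m ^ (n - 1) * (\<Sum>i<n. \<Sum>a<m. (norm (d i a))\<^sup>2)"
      by (simp add: sum_distrib_left)
    finally show ?thesis .
  qed
  have "(\<Sum>\<tau>\<in>?P. (norm (u - \<beta> *\<^sub>R ?v \<tau>))\<^sup>2) = (\<Sum>\<tau>\<in>?P. (norm u)\<^sup>2) - 2 * \<beta> * (\<Sum>\<tau>\<in>?P. inner u (?v \<tau>)) + \<beta>\<^sup>2 * (\<Sum>\<tau>\<in>?P. inner (?v \<tau>) (?v \<tau>))"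
    by (simp add: expand sum.distrib sum_subtractf sum_distrib_left)
  also have "\<dots> = real m ^ n * (norm u)\<^sup>2 + \<beta>\<^sup>2 * real m ^ (n - 1) * (\<Sum>i<n. \<Sum>a<m. (norm (d i a))\<^sup>2)"
    using lin quad cardP by simp
  finally show ?thesis .
qed




definition stp :: "nat \<Rightarrow> nat \<Rightarrow> (nat \<Rightarrow> nat \<Rightarrow> real) \<Rightarrow> (nat \<Rightarrow> nat \<Rightarrow> 'v \<Rightarrow> 'v::real_vector) \<Rightarrow> real
   \<Rightarrow> (nat \<Rightarrow> 'v) \<times> (nat \<Rightarrow> 'v) \<times> (nat \<Rightarrow> 'v) \<times> (nat \<Rightarrow> nat \<Rightarrow> 'v) \<Rightarrow> (nat \<Rightarrow> nat) \<Rightarrow> (nat \<Rightarrow> nat)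
   \<Rightarrow> (nat \<Rightarrow> 'v) \<times> (nat \<Rightarrow> 'v) \<times> (nat \<Rightarrow> 'v) \<times> (nat \<Rightarrow> nat \<Rightarrow> 'v)" where
  "stp n m W G \<alpha> st \<tau> \<sigma> =
     (case st of (x, y, gp, z) \<Rightarrow>
       let g = (\<lambda>i. saga_g m G (\<tau> i) x z i);
           y' = (\<lambda>i. \<Sum>r<n. W i r *\<^sub>R (y r + g r - gp r));
           x' = (\<lambda>i. \<Sum>r<n. W i r *\<^sub>R (x r - \<alpha> *\<^sub>R y' r));
           z' = (\<lambda>i j. if j = \<sigma> i then x i else z i j)
       in (x', y', g, z'))"

lemma gtsaga_Suc2:
  "gtsaga n m W G \<alpha> x0 tau s (Suc k) = stp n m W G \<alpha> (gtsaga n m W G \<alpha> x0 tau s k) (tau k) (s k)"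
  by (simp add: stp_def)

definition tt :: "nat \<Rightarrow> nat \<Rightarrow> (nat \<Rightarrow> 'v) \<times> (nat \<Rightarrow> 'v) \<times> (nat \<Rightarrow> 'v) \<times> (nat \<Rightarrow> nat \<Rightarrow> 'v::real_normed_vector) \<Rightarrow> real" where
  "tt n m st = (1 / real n) * (\<Sum>i<n. (1 / real m) * (\<Sum>j<m. (norm (avg n (fst st) - snd (snd (snd st)) i j))\<^sup>2))"

lemma gt_t_eq: "gt_t n m W G \<alpha> x0 tau s k = tt n m (gtsaga n m W G \<alpha> x0 tau s k)"
  by (simp add: gt_t_def tt_def gt_x_def gt_z_def)

definition steq :: "nat \<Rightarrow> (nat \<Rightarrow> 'v) \<times> (nat \<Rightarrow> 'v) \<times> (nat \<Rightarrow> 'v) \<times> (nat \<Rightarrow> nat \<Rightarrow> 'v) \<Rightarrow> (nat \<Rightarrow> 'v) \<times> (nat \<Rightarrow> 'v) \<times> (nat \<Rightarrow> 'v) \<times> (nat \<Rightarrow> nat \<Rightarrow> 'v) \<Rightarrow> bool" where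
  "steq n st st' \<longleftrightarrow> fst st = fst st' \<and> fst (snd st) = fst (snd st') \<and>
     (\<forall>i<n. fst (snd (snd st)) i = fst (snd (snd st')) i) \<and> (\<forall>i<n. snd (snd (snd st)) i = snd (snd (snd st')) i)"

lemma stp_cong:
  assumes "steq n st st'" "\<And>i. i < n \<Longrightarrow> \<tau> i = \<tau>' i \<and> \<sigma> i = \<sigma>' i"
  shows "steq n (stp n m W G \<alpha> st \<tau> \<sigma>) (stp n m W G \<alpha> st' \<tau>' \<sigma>')"
proof -
  obtain x y gp z where st: "st = (x, y, gp, z)" by (cases st) auto
  obtain x' y' gp' z' where st'0: "st' = (x', y', gp', z')" by (cases st') auto
  have xy: "x' = x" "y' = y" using assms(1) by (auto simp: steq_def st st'0)
  have st': "st' = (x, y, gp', z')" using st'0 xy by simp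
  have e: "\<And>i. i < n \<Longrightarrow> gp i = gp' i" "\<And>i. i < n \<Longrightarrow> z i = z' i"
    using assms(1) by (auto simp: steq_def st st')
  have g: "\<And>i. i < n \<Longrightarrow> saga_g m G (\<tau> i) x z i = saga_g m G (\<tau>' i) x z' i"
    using e assms(2) by (simp add: saga_g_def)
  have Yp: "(\<Sum>r<n. W i r *\<^sub>R (y r + saga_g m G (\<tau> r) x z r - gp r)) =
           (\<Sum>r<n. W i r *\<^sub>R (y r + saga_g m G (\<tau>' r) x z' r - gp' r))" for i
    using e g by (intro sum.cong) auto
  have Z: "\<And>i. i < n \<Longrightarrow> (if j = \<sigma> i then x i else z i j) = (if j = \<sigma>' i then x i else z' i j)" for j
    using e assms(2) by auto
  have c1: "fst (stp n m W G \<alpha> st \<tau> \<sigma>) = fst (stp n m W G \<alpha> st' \<tau>' \<sigma>')"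
    unfolding st st' stp_def Let_def prod.case fst_conv by (simp only: Yp)
  have c2: "fst (snd (stp n m W G \<alpha> st \<tau> \<sigma>)) = fst (snd (stp n m W G \<alpha> st' \<tau>' \<sigma>'))"
    unfolding st st' stp_def Let_def prod.case fst_conv snd_conv by (simp only: Yp)
  have c3: "\<forall>i<n. fst (snd (snd (stp n m W G \<alpha> st \<tau> \<sigma>))) i = fst (snd (snd (stp n m W G \<alpha> st' \<tau>' \<sigma>'))) i"
    unfolding st st' stp_def Let_def prod.case fst_conv snd_conv using g by blast
  have c4: "\<forall>i<n. snd (snd (snd (stp n m W G \<alpha> st \<tau> \<sigma>))) i = snd (snd (snd (stp n m W G \<alpha> st' \<tau>' \<sigma>'))) i"
    unfolding st st' stp_def Let_def prod.case fst_conv snd_conv using Z by auto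
  show ?thesis unfolding steq_def using c1 c2 c3 c4 by blast
qed

lemma gtsaga_cong:
  assumes "\<And>t i. t < k \<Longrightarrow> i < n \<Longrightarrow> tau t i = tau' t i \<and> s t i = s' t i"
  shows "steq n (gtsaga n m W G \<alpha> x0 tau s k) (gtsaga n m W G \<alpha> x0 tau' s' k)"
  using assms
proof (induction k)
  case 0
  then show ?case by (simp add: steq_def)
next
  case (Suc k)
  then show ?case unfolding gtsaga_Suc2 by (intro stp_cong) auto
qed

lemma tt_cong: "steq n st st' \<Longrightarrow> tt n m st = tt n m st'"
  unfolding tt_def steq_def by auto

definition inv_st :: "nat \<Rightarrow> (nat \<Rightarrow> 'v) \<times> (nat \<Rightarrow> 'v) \<times> (nat \<Rightarrow> 'v) \<times> (nat \<Rightarrow> nat \<Rightarrow> 'v::real_vector) \<Rightarrow> bool" where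
  "inv_st n st \<longleftrightarrow> avg n (fst (snd st)) = avg n (fst (snd (snd st)))"

lemma avg_add: "avg n (\<lambda>i. a i + b i) = avg n a + avg n b"
  by (simp add: avg_def sum.distrib scaleR_add_right)
lemma avg_diff: "avg n (\<lambda>i. a i - b i) = avg n a - avg n b"
  by (simp add: avg_def sum_subtractf scaleR_diff_right)
lemma avg_scale: "avg n (\<lambda>i. c *\<^sub>R a i) = c *\<^sub>R avg n a"
  unfolding avg_def by (simp add: scaleR_sum_right)
lemma avg_W:
  assumes "\<And>r. r < n \<Longrightarrow> (\<Sum>i<n. W i r) = 1"
  shows "avg n (\<lambda>i. \<Sum>r<n. W i r *\<^sub>R v r) = avg n v"
proof -
  have "(\<Sum>i<n. \<Sum>r<n. W i r *\<^sub>R v r) = (\<Sum>r<n. (\<Sum>i<n. W i r) *\<^sub>R v r)"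
    by (subst sum.swap) (simp add: scaleR_sum_left)
  also have "\<dots> = (\<Sum>r<n. v r)" using assms by simp
  finally show ?thesis by (simp add: avg_def)
qed

lemma stp_facts:
  assumes W: "\<And>r. r < n \<Longrightarrow> (\<Sum>i<n. W i r) = 1" and inv: "inv_st n (x, y, gp, z)"
  shows "avg n (fst (stp n m W G \<alpha> (x, y, gp, z) \<tau> \<sigma>)) = avg n x - \<alpha> *\<^sub>R avg n (\<lambda>i. saga_g m G (\<tau> i) x z i)"
    and "inv_st n (stp n m W G \<alpha> (x, y, gp, z) \<tau> \<sigma>)"
    and "snd (snd (snd (stp n m W G \<alpha> (x, y, gp, z) \<tau> \<sigma>))) = (\<lambda>i j. if j = \<sigma> i then x i else z i j)"
proof -
  let ?g = "\<lambda>i. saga_g m G (\<tau> i) x z i"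
  let ?y' = "\<lambda>i. \<Sum>r<n. W i r *\<^sub>R (y r + ?g r - gp r)"
  have ay: "avg n ?y' = avg n ?g"
    using inv by (simp add: avg_W[OF W] avg_add avg_diff inv_st_def)
  have ax: "avg n (\<lambda>i. \<Sum>r<n. W i r *\<^sub>R (x r - \<alpha> *\<^sub>R ?y' r)) = avg n x - \<alpha> *\<^sub>R avg n ?g"
    by (simp add: avg_W[OF W] avg_diff avg_scale ay)
  show "avg n (fst (stp n m W G \<alpha> (x, y, gp, z) \<tau> \<sigma>)) = avg n x - \<alpha> *\<^sub>R avg n ?g"
    using ax by (simp add: stp_def Let_def)
  show "inv_st n (stp n m W G \<alpha> (x, y, gp, z) \<tau> \<sigma>)"
    using ay by (simp add: stp_def Let_def inv_st_def)
  show "snd (snd (snd (stp n m W G \<alpha> (x, y, gp, z) \<tau> \<sigma>))) = (\<lambda>i j. if j = \<sigma> i then x i else z i j)"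
    by (simp add: stp_def Let_def)
qed

lemma gtsaga_inv:
  assumes W: "\<And>r. r < n \<Longrightarrow> (\<Sum>i<n. W i r) = 1"
  shows "inv_st n (gtsaga n m W G \<alpha> x0 tau s k)"
proof (induction k)
  case 0
  then show ?case by (simp add: inv_st_def)
next
  case (Suc k)
  obtain x y gp z where e: "gtsaga n m W G \<alpha> x0 tau s k = (x, y, gp, z)" by (cases "gtsaga n m W G \<alpha> x0 tau s k") auto
  show ?case unfolding gtsaga_Suc2 e using stp_facts(2)[OF W] Suc e by simp
qed




lemma sum_if_one:
  fixes A B :: real
  assumes "j < m"
  shows "(\<Sum>a<m. if j = a then A else B) = A + (real m - 1) * B"
proof -
  have "(\<Sum>a<m. if j = a then A else B) = (if j = j then A else B) + (\<Sum>a\<in>{..<m}-{j}. if j = a then A else B)"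
    using assms by (intro sum.remove) auto
  also have "(\<Sum>a\<in>{..<m}-{j}. if j = a then A else B) = (\<Sum>a\<in>{..<m}-{j}. B)"
    by (intro sum.cong) auto
  also have "\<dots> = (real m - 1) * B" using assms by (simp add: card_Diff_singleton of_nat_diff)
  finally show ?thesis by simp
qed

lemma norm_diff_sq_le: "(norm (a - b))\<^sup>2 \<le> 2 * (norm a)\<^sup>2 + 2 * (norm (b::'v::real_normed_vector))\<^sup>2"
proof -
  have "norm (a - b) \<le> norm a + norm b" by (rule norm_triangle_ineq4)
  then have "(norm (a - b))\<^sup>2 \<le> (norm a + norm b)\<^sup>2" by (simp add: power_mono)
  also have "\<dots> \<le> 2 * (norm a)\<^sup>2 + 2 * (norm b)\<^sup>2"
  proof -
    have "0 \<le> (norm a - norm b)\<^sup>2" by simp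
    then show ?thesis unfolding power2_sum power2_diff by linarith
  qed
  finally show ?thesis .
qed

lemma var_le:
  fixes e :: "nat \<Rightarrow> 'v::real_inner"
  assumes m: "m \<ge> 1"
  shows "(\<Sum>a<m. (norm (e a - (1 / real m) *\<^sub>R (\<Sum>b<m. e b)))\<^sup>2) \<le> (\<Sum>a<m. (norm (e a))\<^sup>2)"
proof -
  define eb where "eb = (1 / real m) *\<^sub>R (\<Sum>b<m. e b)"
  have S: "(\<Sum>b<m. e b) = real m *\<^sub>R eb" using m by (simp add: eb_def)
  have "(\<Sum>a<m. (norm (e a - eb))\<^sup>2) = (\<Sum>a<m. (norm (e a))\<^sup>2 - 2 * inner (e a) eb + inner eb eb)"
    unfolding power2_norm_eq_inner by (intro sum.cong refl) (simp add: inner_diff_left inner_diff_right inner_commute)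
  also have "\<dots> = (\<Sum>a<m. (norm (e a))\<^sup>2) - 2 * inner (\<Sum>a<m. e a) eb + real m * inner eb eb"
    by (simp add: sum.distrib sum_subtractf inner_sum_left sum_distrib_left)
  also have "\<dots> = (\<Sum>a<m. (norm (e a))\<^sup>2) - real m * inner eb eb"
    unfolding S by simp
  also have "\<dots> \<le> (\<Sum>a<m. (norm (e a))\<^sup>2)" by simp
  finally show ?thesis unfolding eb_def .
qed


lemma core:
  fixes x y gp :: "nat \<Rightarrow> 'v::real_inner" and z :: "nat \<Rightarrow> nat \<Rightarrow> 'v" and G :: "nat \<Rightarrow> nat \<Rightarrow> 'v \<Rightarrow> 'v"
  assumes n: "n \<ge> 1" and m: "m \<ge> 1"
    and W: "\<And>r. r < n \<Longrightarrow> (\<Sum>i<n. W i r) = 1"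
    and inv: "inv_st n (x, y, gp, z)"
    and smooth: "\<And>i j a b. i < n \<Longrightarrow> j < m \<Longrightarrow> norm (G i j a - G i j b) \<le> L * norm (a - b)"
    and L: "L > 0"
    and al: "\<alpha>\<^sup>2 * L\<^sup>2 \<le> real n / (8 * real m)"
  shows "(\<Sum>\<tau>\<in>PiE {..<n} (\<lambda>_. {..<m}). \<Sum>\<sigma>\<in>PiE {..<n} (\<lambda>_. {..<m}).
            (1 / real m) ^ (2 * n) * tt n m (stp n m W G \<alpha> (x, y, gp, z) \<tau> \<sigma>))
     \<le> 2 * tt n m (x, y, gp, z) + 3 * \<alpha>\<^sup>2 * (norm (avg_grad n m G x))\<^sup>2
       + 9 / (4 * real m * real n) * consensus_err n x"
proof -
  let ?P = "PiE {..<n} (\<lambda>_. {..<m})"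
  define xb where "xb = avg n x"
  define gf where "gf i = (1 / real m) *\<^sub>R (\<Sum>j<m. G i j (x i))" for i
  define Q where "Q = (norm (avg n gf))\<^sup>2"
  define d where "d i a = saga_g m G a x z i - gf i" for i a
  define Sd where "Sd = (\<Sum>i<n. \<Sum>a<m. (norm (d i a))\<^sup>2)"
  define T where "T = tt n m (x, y, gp, z)"
  define Cn where "Cn = consensus_err n x"
  define K0 where "K0 = (\<alpha> / real n)\<^sup>2 * Sd / real m"
  define w where "w \<tau> = xb - \<alpha> *\<^sub>R avg n (\<lambda>i. saga_g m G (\<tau> i) x z i)" for \<tau>
  define E where "E c = (1 / real m) ^ n * (\<Sum>\<tau>\<in>?P. (norm (w \<tau> - c))\<^sup>2)" for c
  have mpos: "real m > 0" and npos: "real n > 0" using m n by auto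
  have QQ: "avg_grad n m G x = avg n gf"
  proof -
    have "gf = (\<lambda>i. (1 / real m) *\<^sub>R (\<Sum>j<m. G i j (x i)))" by (rule ext) (simp add: gf_def)
    then show ?thesis by (simp add: avg_grad_def)
  qed
  have zsum: "(\<Sum>a<m. d i a) = 0" if i: "i < n" for i
  proof -
    have "(\<Sum>a<m. d i a) = (\<Sum>a<m. G i a (x i)) - (\<Sum>a<m. G i a (z i a)) + real m *\<^sub>R ((1 / real m) *\<^sub>R (\<Sum>j<m. G i j (z i j))) - real m *\<^sub>R gf i"
      using mpos by (simp add: d_def saga_g_def sum.distrib sum_subtractf sum_constant_scaleR)
    also have "\<dots> = 0" using mpos by (simp add: gf_def)
    finally show ?thesis .
  qed
  have Eeq: "E c = (norm (xb - \<alpha> *\<^sub>R avg n gf - c))\<^sup>2 + K0" for c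
  proof -
    have wt: "w \<tau> - c = (xb - \<alpha> *\<^sub>R avg n gf - c) - (\<alpha> / real n) *\<^sub>R (\<Sum>i<n. d i (\<tau> i))" for \<tau>
    proof -
      have "avg n (\<lambda>i. saga_g m G (\<tau> i) x z i) = avg n (\<lambda>i. gf i + d i (\<tau> i))"
        by (simp add: d_def)
      also have "\<dots> = avg n gf + (1 / real n) *\<^sub>R (\<Sum>i<n. d i (\<tau> i))"
        by (simp add: avg_add avg_def)
      finally show ?thesis by (simp add: w_def algebra_simps)
    qed
    have "E c = (1 / real m) ^ n * (real m ^ n * (norm (xb - \<alpha> *\<^sub>R avg n gf - c))\<^sup>2 + (\<alpha> / real n)\<^sup>2 * real m ^ (n - 1) * Sd)"
      unfolding E_def wt Sd_def by (subst var_PiE) (auto simp: zsum)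
    also have "\<dots> = (norm (xb - \<alpha> *\<^sub>R avg n gf - c))\<^sup>2 + K0"
    proof -
      have h2: "(1 / real m) ^ n * real m ^ (n - 1) = 1 / real m"
        using mpos n by (cases n) (auto simp: power_one_over field_simps)
      have h1: "(1 / real m) ^ n * real m ^ n = 1"
        using mpos by (simp add: power_one_over)
      define A where "A = (norm (xb - \<alpha> *\<^sub>R avg n gf - c))\<^sup>2"
      define cc where "cc = (\<alpha> / real n)\<^sup>2"
      have "(1 / real m) ^ n * (real m ^ n * A + cc * real m ^ (n - 1) * Sd) =
            ((1 / real m) ^ n * real m ^ n) * A + cc * Sd * ((1 / real m) ^ n * real m ^ (n - 1))"
        by (simp add: algebra_simps)
      also have "\<dots> = A + cc * Sd / real m" unfolding h1 h2 by simp
      finally show ?thesis unfolding K0_def A_def cc_def by simp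
    qed
    finally show ?thesis .
  qed
  have Ebound: "E c \<le> 2 * (norm (xb - c))\<^sup>2 + 2 * \<alpha>\<^sup>2 * Q + K0" for c
  proof -
    have "(norm ((xb - c) - \<alpha> *\<^sub>R avg n gf))\<^sup>2 \<le> 2 * (norm (xb - c))\<^sup>2 + 2 * (norm (\<alpha> *\<^sub>R avg n gf))\<^sup>2"
      by (rule norm_diff_sq_le)
    also have "(norm (\<alpha> *\<^sub>R avg n gf))\<^sup>2 = \<alpha>\<^sup>2 * Q" by (simp add: Q_def power_mult_distrib)
    finally show ?thesis unfolding Eeq by (simp add: algebra_simps)
  qed
  have Sdb: "Sd \<le> 2 * L\<^sup>2 * real m * (Cn + real n * T)"
  proof -
    define e where "e i a = G i a (x i) - G i a (z i a)" for i a
    have de: "d i a = e i a - (1 / real m) *\<^sub>R (\<Sum>b<m. e i b)" for i a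
    proof -
      have "(1 / real m) *\<^sub>R (\<Sum>b<m. e i b) = gf i - (1 / real m) *\<^sub>R (\<Sum>j<m. G i j (z i j))"
        by (simp add: e_def gf_def sum_subtractf scaleR_diff_right)
      then show ?thesis by (simp add: d_def saga_g_def e_def)
    qed
    have "Sd \<le> (\<Sum>i<n. \<Sum>a<m. (norm (e i a))\<^sup>2)"
      unfolding Sd_def de by (intro sum_mono var_le m)
    also have "\<dots> \<le> (\<Sum>i<n. \<Sum>a<m. L\<^sup>2 * (2 * (norm (x i - xb))\<^sup>2 + 2 * (norm (xb - z i a))\<^sup>2))"
    proof (intro sum_mono)
      fix i a assume i: "i \<in> {..<n}" and a: "a \<in> {..<m}"
      have "norm (e i a) \<le> L * norm (x i - z i a)" using smooth i a by (simp add: e_def)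
      then have "(norm (e i a))\<^sup>2 \<le> (L * norm (x i - z i a))\<^sup>2" by (simp add: power_mono)
      also have "\<dots> = L\<^sup>2 * (norm ((x i - xb) - (z i a - xb)))\<^sup>2" by (simp add: power_mult_distrib)
      also have "\<dots> \<le> L\<^sup>2 * (2 * (norm (x i - xb))\<^sup>2 + 2 * (norm (z i a - xb))\<^sup>2)"
        by (intro mult_left_mono norm_diff_sq_le) auto
      finally show "(norm (e i a))\<^sup>2 \<le> L\<^sup>2 * (2 * (norm (x i - xb))\<^sup>2 + 2 * (norm (xb - z i a))\<^sup>2)"
        by (simp add: norm_minus_commute)
    qed
    also have "\<dots> = 2 * L\<^sup>2 * (real m * (\<Sum>i<n. (norm (x i - xb))\<^sup>2) + (\<Sum>i<n. \<Sum>a<m. (norm (xb - z i a))\<^sup>2))"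
      by (simp add: sum.distrib sum_distrib_left algebra_simps)
    also have "(\<Sum>i<n. \<Sum>a<m. (norm (xb - z i a))\<^sup>2) = real n * real m * T"
      using mpos npos by (simp add: T_def tt_def xb_def sum_distrib_left)
    also have "(\<Sum>i<n. (norm (x i - xb))\<^sup>2) = Cn" by (simp add: Cn_def consensus_err_def xb_def)
    finally show ?thesis by (simp add: algebra_simps)
  qed
  have K0b: "K0 \<le> Cn / (4 * real m * real n) + T / (4 * real m)"
  proof -
    have T0: "T \<ge> 0" unfolding T_def tt_def by (intro mult_nonneg_nonneg sum_nonneg) auto
    have C0: "Cn \<ge> 0" unfolding Cn_def consensus_err_def by (intro sum_nonneg) auto
    have "K0 = \<alpha>\<^sup>2 * Sd / (real n ^ 2 * real m)" by (simp add: K0_def power_divide)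
    also have "\<dots> \<le> \<alpha>\<^sup>2 * (2 * L\<^sup>2 * real m * (Cn + real n * T)) / (real n ^ 2 * real m)"
      by (intro divide_right_mono mult_left_mono Sdb) auto
    also have "\<dots> = 2 * (\<alpha>\<^sup>2 * L\<^sup>2) * (Cn + real n * T) / (real n ^ 2)"
      using mpos npos by (simp add: field_simps)
    also have "\<dots> \<le> 2 * (real n / (8 * real m)) * (Cn + real n * T) / (real n ^ 2)"
      using T0 C0 npos by (intro divide_right_mono mult_right_mono mult_left_mono al) auto
    also have "\<dots> = Cn / (4 * real m * real n) + T / (4 * real m)"
      using mpos npos by (simp add: field_simps power2_eq_square)
    finally show ?thesis .
  qed
  define X where "X \<tau> i j = (norm (w \<tau> - x i))\<^sup>2 + (real m - 1) * (norm (w \<tau> - z i j))\<^sup>2" for \<tau> i j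
  have sig: "(\<Sum>\<sigma>\<in>?P. tt n m (stp n m W G \<alpha> (x, y, gp, z) \<tau> \<sigma>)) = (1 / real n) * (1 / real m) * real m ^ (n - 1) * (\<Sum>i<n. \<Sum>j<m. X \<tau> i j)" for \<tau>
  proof -
    have tte: "tt n m (stp n m W G \<alpha> (x, y, gp, z) \<tau> \<sigma>) = (1 / real n) * (\<Sum>i<n. (1 / real m) * (\<Sum>j<m. (norm (w \<tau> - (if j = \<sigma> i then x i else z i j)))\<^sup>2))" for \<sigma>
      by (simp add: tt_def stp_facts[OF W inv] w_def xb_def)
    have inner: "(\<Sum>\<sigma>\<in>?P. (norm (w \<tau> - (if j = \<sigma> i then x i else z i j)))\<^sup>2) = real m ^ (n - 1) * X \<tau> i j"
      if i: "i < n" and j: "j < m" for i j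
    proof -
      have "(\<Sum>\<sigma>\<in>?P. (norm (w \<tau> - (if j = \<sigma> i then x i else z i j)))\<^sup>2) = real m ^ (n - 1) * (\<Sum>a<m. (norm (w \<tau> - (if j = a then x i else z i j)))\<^sup>2)"
        using i sum_PiE_single[of "{..<n}" i "{..<m}" "\<lambda>a. (norm (w \<tau> - (if j = a then x i else z i j)))\<^sup>2"] by simp
      also have "(\<Sum>a<m. (norm (w \<tau> - (if j = a then x i else z i j)))\<^sup>2) = (\<Sum>a<m. if j = a then (norm (w \<tau> - x i))\<^sup>2 else (norm (w \<tau> - z i j))\<^sup>2)"
        by (intro sum.cong) auto
      also have "\<dots> = X \<tau> i j" using j by (simp add: sum_if_one X_def)
      finally show ?thesis .
    qed
    have "(\<Sum>\<sigma>\<in>?P. tt n m (stp n m W G \<alpha> (x, y, gp, z) \<tau> \<sigma>)) = (1 / real n) * (\<Sum>i<n. (1 / real m) * (\<Sum>j<m. \<Sum>\<sigma>\<in>?P. (norm (w \<tau> - (if j = \<sigma> i then x i else z i j)))\<^sup>2))"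
      unfolding tte by (simp add: sum_distrib_left sum.swap[of _ ?P])
    also have "\<dots> = (1 / real n) * (\<Sum>i<n. (1 / real m) * (\<Sum>j<m. real m ^ (n - 1) * X \<tau> i j))"
      by (intro arg_cong2[where f="(*)"] sum.cong refl) (simp_all add: inner)
    also have "\<dots> = (1 / real n) * (1 / real m) * real m ^ (n - 1) * (\<Sum>i<n. \<Sum>j<m. X \<tau> i j)"
      by (simp only: sum_distrib_left mult.assoc)
    finally show ?thesis .
  qed
  have sX: "(\<Sum>\<tau>\<in>?P. X \<tau> i j) = real m ^ n * (E (x i) + (real m - 1) * E (z i j))" for i j
  proof -
    have h: "real m ^ n * (1 / real m) ^ n = 1" using mpos by (simp add: power_one_over)
    have s1: "(\<Sum>\<tau>\<in>?P. X \<tau> i j) = (\<Sum>\<tau>\<in>?P. (norm (w \<tau> - x i))\<^sup>2) + (real m - 1) * (\<Sum>\<tau>\<in>?P. (norm (w \<tau> - z i j))\<^sup>2)"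
      by (simp add: X_def sum.distrib sum_distrib_left)
    have s2: "real m ^ n * E c = (\<Sum>\<tau>\<in>?P. (norm (w \<tau> - c))\<^sup>2)" for c
      unfolding E_def mult.assoc[symmetric] h by simp
    have "real m ^ n * (E (x i) + (real m - 1) * E (z i j)) = real m ^ n * E (x i) + (real m - 1) * (real m ^ n * E (z i j))"
      by (simp add: algebra_simps)
    then show ?thesis unfolding s1 s2 by simp
  qed
  let ?c = "(1 / real m) ^ (2 * n)"
  have eq1: "(\<Sum>\<tau>\<in>?P. \<Sum>\<sigma>\<in>?P. ?c * tt n m (stp n m W G \<alpha> (x, y, gp, z) \<tau> \<sigma>))
      = ?c * ((1 / real n) * (1 / real m) * real m ^ (n - 1)) * (\<Sum>\<tau>\<in>?P. \<Sum>i<n. \<Sum>j<m. X \<tau> i j)"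
  proof -
    have "(\<Sum>\<tau>\<in>?P. \<Sum>\<sigma>\<in>?P. ?c * tt n m (stp n m W G \<alpha> (x, y, gp, z) \<tau> \<sigma>))
      = (\<Sum>\<tau>\<in>?P. ?c * ((1 / real n) * (1 / real m) * real m ^ (n - 1) * (\<Sum>i<n. \<Sum>j<m. X \<tau> i j)))"
      by (simp add: sum_distrib_left[symmetric] sig)
    also have "\<dots> = ?c * ((1 / real n) * (1 / real m) * real m ^ (n - 1)) * (\<Sum>\<tau>\<in>?P. \<Sum>i<n. \<Sum>j<m. X \<tau> i j)"
      by (simp only: sum_distrib_left[symmetric] mult.assoc)
    finally show ?thesis .
  qed
  have eq2: "(\<Sum>\<tau>\<in>?P. \<Sum>i<n. \<Sum>j<m. X \<tau> i j) = real m ^ n * (\<Sum>i<n. \<Sum>j<m. E (x i) + (real m - 1) * E (z i j))"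
  proof -
    have "(\<Sum>\<tau>\<in>?P. \<Sum>i<n. \<Sum>j<m. X \<tau> i j) = (\<Sum>i<n. \<Sum>j<m. \<Sum>\<tau>\<in>?P. X \<tau> i j)"
      by (subst sum.swap) (rule sum.cong[OF refl], rule sum.swap)
    also have "\<dots> = real m ^ n * (\<Sum>i<n. \<Sum>j<m. E (x i) + (real m - 1) * E (z i j))"
      by (simp only: sX sum_distrib_left)
    finally show ?thesis .
  qed
  have eq3: "?c * ((1 / real n) * (1 / real m) * real m ^ (n - 1)) * real m ^ n = 1 / (real n * real m ^ 2)"
  proof -
    obtain k where k: "n = Suc k" using n by (cases n) auto
    have e1: "real m ^ (n - 1) * real m ^ n * real m = real m ^ (2 * n)"
      unfolding k by (simp add: mult_2 power_add algebra_simps power_mult[symmetric] power2_eq_square[symmetric])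
    have e2: "?c * real m ^ (2 * n) = 1"
      using mpos by (simp add: power_mult_distrib[symmetric])
    have "?c * real m ^ (n - 1) * real m ^ n * real m = 1"
      using e1 e2 by (simp add: mult.assoc)
    then show ?thesis using mpos npos by (simp add: field_simps power2_eq_square)
  qed
  have le1: "(\<Sum>i<n. \<Sum>j<m. E (x i) + (real m - 1) * E (z i j)) \<le> (\<Sum>i<n. \<Sum>j<m. (2 * (norm (xb - x i))\<^sup>2 + 2 * \<alpha>\<^sup>2 * Q + K0) + (real m - 1) * (2 * (norm (xb - z i j))\<^sup>2 + 2 * \<alpha>\<^sup>2 * Q + K0))"
  proof (intro sum_mono)
    fix i j
    have "(real m - 1) * E (z i j) \<le> (real m - 1) * (2 * (norm (xb - z i j))\<^sup>2 + 2 * \<alpha>\<^sup>2 * Q + K0)"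
      using m by (intro mult_left_mono Ebound) auto
    then show "E (x i) + (real m - 1) * E (z i j) \<le> (2 * (norm (xb - x i))\<^sup>2 + 2 * \<alpha>\<^sup>2 * Q + K0) + (real m - 1) * (2 * (norm (xb - z i j))\<^sup>2 + 2 * \<alpha>\<^sup>2 * Q + K0)"
      using Ebound[of "x i"] by linarith
  qed
  have eq4: "(\<Sum>i<n. \<Sum>j<m. (2 * (norm (xb - x i))\<^sup>2 + 2 * \<alpha>\<^sup>2 * Q + K0) + (real m - 1) * (2 * (norm (xb - z i j))\<^sup>2 + 2 * \<alpha>\<^sup>2 * Q + K0)) = (real m * (2 * Cn + real n * (2 * \<alpha>\<^sup>2 * Q + K0)) + (real m - 1) * (2 * (real n * real m * T) + real n * real m * (2 * \<alpha>\<^sup>2 * Q + K0)))"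
  proof -
    have a: "(\<Sum>i<n. (norm (xb - x i))\<^sup>2) = Cn" unfolding Cn_def consensus_err_def xb_def
      by (intro sum.cong refl) (simp only: norm_minus_commute)
    have b: "(\<Sum>i<n. \<Sum>a<m. (norm (xb - z i a))\<^sup>2) = real n * real m * T"
      using mpos npos by (simp add: T_def tt_def xb_def sum_distrib_left)
    define c0 where "c0 = 2 * \<alpha>\<^sup>2 * Q + K0"
    have s1: "(\<Sum>i<n. \<Sum>j<m. (2 * (norm (xb - x i))\<^sup>2 + c0)) = real m * (2 * Cn + real n * c0)"
    proof -
      have "(\<Sum>i<n. \<Sum>j<m. (2 * (norm (xb - x i))\<^sup>2 + c0)) = (\<Sum>i<n. real m * (2 * (norm (xb - x i))\<^sup>2 + c0))"
        by simp
      also have "\<dots> = real m * (2 * (\<Sum>i<n. (norm (xb - x i))\<^sup>2) + real n * c0)"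
        by (simp add: sum_distrib_left[symmetric] sum.distrib)
      finally show ?thesis unfolding a .
    qed
    have s2: "(\<Sum>i<n. \<Sum>j<m. (2 * (norm (xb - z i j))\<^sup>2 + c0)) = 2 * (real n * real m * T) + real n * real m * c0"
    proof -
      have "(\<Sum>i<n. \<Sum>j<m. (2 * (norm (xb - z i j))\<^sup>2 + c0)) = 2 * (\<Sum>i<n. \<Sum>j<m. (norm (xb - z i j))\<^sup>2) + real n * real m * c0"
        by (simp add: sum.distrib sum_distrib_left[symmetric])
      then show ?thesis unfolding b .
    qed
    have "(\<Sum>i<n. \<Sum>j<m. (2 * (norm (xb - x i))\<^sup>2 + c0) + (real m - 1) * (2 * (norm (xb - z i j))\<^sup>2 + c0))
        = (\<Sum>i<n. \<Sum>j<m. (2 * (norm (xb - x i))\<^sup>2 + c0)) + (real m - 1) * (\<Sum>i<n. \<Sum>j<m. (2 * (norm (xb - z i j))\<^sup>2 + c0))"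
    proof -
      define Px where "Px i = 2 * (norm (xb - x i))\<^sup>2 + c0" for i
      define Rz where "Rz i j = 2 * (norm (xb - z i j))\<^sup>2 + c0" for i j
      have "(\<Sum>i<n. \<Sum>j<m. Px i + (real m - 1) * Rz i j) = (\<Sum>i<n. \<Sum>j<m. Px i) + (real m - 1) * (\<Sum>i<n. \<Sum>j<m. Rz i j)"
        by (simp only: sum.distrib sum_distrib_left)
      then show ?thesis unfolding Px_def Rz_def .
    qed
    then have "(\<Sum>i<n. \<Sum>j<m. (2 * (norm (xb - x i))\<^sup>2 + c0) + (real m - 1) * (2 * (norm (xb - z i j))\<^sup>2 + c0))
        = real m * (2 * Cn + real n * c0) + (real m - 1) * (2 * (real n * real m * T) + real n * real m * c0)"
      unfolding s1 s2 .
    then show ?thesis unfolding c0_def by (simp only: add.assoc)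
  qed
  have tot: "(\<Sum>\<tau>\<in>?P. \<Sum>\<sigma>\<in>?P. ?c * tt n m (stp n m W G \<alpha> (x, y, gp, z) \<tau> \<sigma>)) \<le>
     1 / (real n * real m ^ 2) * (real m * (2 * Cn + real n * (2 * \<alpha>\<^sup>2 * Q + K0)) + (real m - 1) * (2 * (real n * real m * T) + real n * real m * (2 * \<alpha>\<^sup>2 * Q + K0)))"
  proof -
    have "(\<Sum>\<tau>\<in>?P. \<Sum>\<sigma>\<in>?P. ?c * tt n m (stp n m W G \<alpha> (x, y, gp, z) \<tau> \<sigma>)) = 
       (?c * ((1 / real n) * (1 / real m) * real m ^ (n - 1)) * real m ^ n) * (\<Sum>i<n. \<Sum>j<m. E (x i) + (real m - 1) * E (z i j))"
      unfolding eq1 eq2 by (simp only: mult.assoc)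
    also have "\<dots> = 1 / (real n * real m ^ 2) * (\<Sum>i<n. \<Sum>j<m. E (x i) + (real m - 1) * E (z i j))" unfolding eq3 ..
    also have "\<dots> \<le> 1 / (real n * real m ^ 2) * (\<Sum>i<n. \<Sum>j<m. (2 * (norm (xb - x i))\<^sup>2 + 2 * \<alpha>\<^sup>2 * Q + K0) + (real m - 1) * (2 * (norm (xb - z i j))\<^sup>2 + 2 * \<alpha>\<^sup>2 * Q + K0))"
      using le1 by (intro mult_left_mono) auto
    finally show ?thesis unfolding eq4 .
  qed
  note tot
  also have "\<dots> = 2 * (Cn / (real m * real n)) + 2 * \<alpha>\<^sup>2 * Q + K0 + 2 * T - 2 * (T / real m)"
    using mpos npos by (simp add: field_simps power2_eq_square)
  also have "\<dots> \<le> 2 * T + 3 * \<alpha>\<^sup>2 * Q + 9 / 4 * (Cn / (real m * real n))"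
  proof -
    have T0: "T \<ge> 0" unfolding T_def tt_def by (intro mult_nonneg_nonneg sum_nonneg) auto
    have "Cn / (4 * real m * real n) = (1/4) * (Cn / (real m * real n))" by simp
    moreover have "T / (4 * real m) = (1/4) * (T / real m)" by simp
    moreover have "T / real m \<ge> 0" using T0 mpos by simp
    moreover have "\<alpha>\<^sup>2 * Q \<ge> 0" by (simp add: Q_def)
    ultimately show ?thesis using K0b by linarith
  qed
  finally show ?thesis
    by (simp add: T_def Cn_def Q_def QQ)
qed




locale gts =
  fixes n m :: nat and W :: "nat \<Rightarrow> nat \<Rightarrow> real" and G :: "nat \<Rightarrow> nat \<Rightarrow> 'v::euclidean_space \<Rightarrow> 'v"
    and \<alpha> :: real and x0 :: 'v and M :: "'w measure" and tau s :: "nat \<Rightarrow> nat \<Rightarrow> 'w \<Rightarrow> nat" and k :: nat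
  assumes n: "n \<ge> 1" and m: "m \<ge> 1"
    and prob: "prob_space M"
    and indep: "prob_space.indep_vars M (\<lambda>_. count_space UNIV)
                  (\<lambda>(b, k, i). if b then tau k i else s k i) (UNIV \<times> UNIV \<times> {..<n})"
    and unif_tau: "\<And>k i j. i < n \<Longrightarrow> j < m \<Longrightarrow> measure M {\<omega> \<in> space M. tau k i \<omega> = j} = 1 / real m"
    and unif_s: "\<And>k i j. i < n \<Longrightarrow> j < m \<Longrightarrow> measure M {\<omega> \<in> space M. s k i \<omega> = j} = 1 / real m"
begin

sublocale prob_space M by (rule prob)

abbreviation "X \<equiv> (\<lambda>(b, k, i). if b then tau k i else s k i)"

lemma rv_tau: "i < n \<Longrightarrow> tau t i \<in> M \<rightarrow>\<^sub>M count_space UNIV"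
proof -
  assume i: "i < n"
  have "\<forall>j\<in>UNIV \<times> UNIV \<times> {..<n}. random_variable (count_space UNIV) (X j)"
    using indep unfolding indep_vars_def by blast
  then have "random_variable (count_space UNIV) (X (True, t, i))" using i by blast
  then show ?thesis by simp
qed
lemma rv_s: "i < n \<Longrightarrow> s t i \<in> M \<rightarrow>\<^sub>M count_space UNIV"
proof -
  assume i: "i < n"
  have "\<forall>j\<in>UNIV \<times> UNIV \<times> {..<n}. random_variable (count_space UNIV) (X j)"
    using indep unfolding indep_vars_def by blast
  then have "random_variable (count_space UNIV) (X (False, t, i))" using i by blast
  then show ?thesis by simp
qed

lemma ev_tau: "i < n \<Longrightarrow> {\<omega> \<in> space M. P (tau t i \<omega>)} \<in> sets M"
proof -
  assume "i < n"
  from measurable_sets[OF rv_tau[OF this], of "{a. P a}" t] show ?thesis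
    by (simp add: vimage_def Int_def conj_commute)
qed
lemma ev_s: "i < n \<Longrightarrow> {\<omega> \<in> space M. P (s t i \<omega>)} \<in> sets M"
proof -
  assume "i < n"
  from measurable_sets[OF rv_s[OF this], of "{a. P a}" t] show ?thesis
    by (simp add: vimage_def Int_def conj_commute)
qed

definition "gensF = {Z -` A \<inter> space M | Z A. \<exists>t i. t < k \<and> i < n \<and> (Z = tau t i \<or> Z = s t i)}"
abbreviation "F \<equiv> filt M n tau s k"

lemma gensF_sub: "gensF \<subseteq> sets M"
  unfolding gensF_def using rv_tau rv_s by (auto intro: measurable_sets)

lemma gensF_Pow: "gensF \<subseteq> Pow (space M)"
  unfolding gensF_def by auto

lemma sets_F: "sets F = sigma_sets (space M) gensF" and space_F: "space F = space M"
  unfolding filt_def gensF_def[symmetric] using gensF_Pow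
  by (simp_all add: sets_measure_of space_measure_of)

lemma subalg: "subalgebra M F"
  unfolding subalgebra_def sets_F space_F using gensF_sub by (simp add: sets.sigma_sets_subset)

lemma sfs: "sigma_finite_subalgebra M F"
proof -
  have "finite_measure_subalgebra M F"
    unfolding finite_measure_subalgebra_def finite_measure_subalgebra_axioms_def
    using finite_measure_axioms subalg by simp
  then show ?thesis by (rule finite_measure_subalgebra_is_sigma_finite)
qed

lemma evF_tau: "t < k \<Longrightarrow> i < n \<Longrightarrow> {\<omega> \<in> space M. P (tau t i \<omega>)} \<in> sets F"
proof -
  assume "t < k" "i < n"
  then have "tau t i -` {a. P a} \<inter> space M \<in> gensF" unfolding gensF_def by blast
  then show ?thesis unfolding sets_F by (auto simp: vimage_def Int_def conj_commute)
qed
lemma evF_s: "t < k \<Longrightarrow> i < n \<Longrightarrow> {\<omega> \<in> space M. P (s t i \<omega>)} \<in> sets F"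
proof -
  assume "t < k" "i < n"
  then have "s t i -` {a. P a} \<inter> space M \<in> gensF" unfolding gensF_def by blast
  then show ?thesis unfolding sets_F by (auto simp: vimage_def Int_def conj_commute)
qed


definition "PP = PiE {..<n} (\<lambda>_. {..<m})"
definition "PK = PiE {..<k} (\<lambda>_. PP)"
definition "Ep T S = {\<omega> \<in> space M. \<forall>p\<in>{..<k} \<times> {..<n}. tau (fst p) (snd p) \<omega> = T (fst p) (snd p) \<and> s (fst p) (snd p) \<omega> = S (fst p) (snd p)}"
definition "Bc \<tau> \<sigma> = {\<omega> \<in> space M. \<forall>i\<in>{..<n}. tau k i \<omega> = \<tau> i \<and> s k i \<omega> = \<sigma> i}"
definition "pT \<omega> = (\<lambda>t\<in>{..<k}. \<lambda>i\<in>{..<n}. tau t i \<omega>)"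
definition "pS \<omega> = (\<lambda>t\<in>{..<k}. \<lambda>i\<in>{..<n}. s t i \<omega>)"
definition "c\<tau> \<omega> = (\<lambda>i\<in>{..<n}. tau k i \<omega>)"
definition "c\<sigma> \<omega> = (\<lambda>i\<in>{..<n}. s k i \<omega>)"
definition "good \<omega> \<longleftrightarrow> (\<forall>p\<in>{..k} \<times> {..<n}. tau (fst p) (snd p) \<omega> < m \<and> s (fst p) (snd p) \<omega> < m)"
definition "\<Phi> T S \<tau> \<sigma> = tt n m (stp n m W G \<alpha> (gtsaga n m W G \<alpha> x0 T S k) \<tau> \<sigma>)"
definition "Y \<omega> = gt_t n m W G \<alpha> x0 (\<lambda>t i. tau t i \<omega>) (\<lambda>t i. s t i \<omega>) (Suc k)"

lemma Ep_F: "Ep T S \<in> sets F"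
proof -
  have "{\<omega> \<in> space F. \<forall>p\<in>{..<k} \<times> {..<n}. tau (fst p) (snd p) \<omega> = T (fst p) (snd p) \<and> s (fst p) (snd p) \<omega> = S (fst p) (snd p)} \<in> sets F"
  proof (intro sets.sets_Collect_finite_All sets.sets_Collect_conj)
    fix p assume "p \<in> {..<k} \<times> {..<n}"
    then show "{\<omega> \<in> space F. tau (fst p) (snd p) \<omega> = T (fst p) (snd p)} \<in> sets F"
      and "{\<omega> \<in> space F. s (fst p) (snd p) \<omega> = S (fst p) (snd p)} \<in> sets F"
      unfolding space_F by (auto intro: evF_tau evF_s)
  qed auto
  then show ?thesis unfolding Ep_def space_F .
qed

lemma Ep_M: "Ep T S \<in> sets M"
  using Ep_F subalg unfolding subalgebra_def by auto

lemma Bc_M: "Bc \<tau> \<sigma> \<in> sets M"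
  unfolding Bc_def
  by (intro sets.sets_Collect_finite_All sets.sets_Collect_conj) (auto intro: ev_tau ev_s)

lemma pT_PK: "good \<omega> \<Longrightarrow> pT \<omega> \<in> PK" and pS_PK: "good \<omega> \<Longrightarrow> pS \<omega> \<in> PK"
  and c\<tau>_PP: "good \<omega> \<Longrightarrow> c\<tau> \<omega> \<in> PP" and c\<sigma>_PP: "good \<omega> \<Longrightarrow> c\<sigma> \<omega> \<in> PP"
  unfolding good_def pT_def pS_def c\<tau>_def c\<sigma>_def PK_def PP_def by auto

lemma ext2:
  assumes "T \<in> PK" "\<And>t i. t < k \<Longrightarrow> i < n \<Longrightarrow> T t i = T' t i" "T' \<in> PK"
  shows "T = T'"
proof (rule ext)
  fix t show "T t = T' t"
  proof (cases "t < k")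
    case True
    then have "T t \<in> PP" "T' t \<in> PP" using assms unfolding PK_def by auto
    then show ?thesis using assms(2)[OF True] unfolding PP_def
      by (intro ext) (metis PiE_arb lessThan_iff)
  next
    case False
    then show ?thesis using assms unfolding PK_def by (metis PiE_arb lessThan_iff)
  qed
qed

lemma ext1:
  assumes "\<tau> \<in> PP" "\<And>i. i < n \<Longrightarrow> \<tau> i = \<tau>' i" "\<tau>' \<in> PP"
  shows "\<tau> = \<tau>'"
  using assms unfolding PP_def by (intro ext) (metis PiE_arb lessThan_iff)

lemma Ep_iff:
  assumes "\<omega> \<in> space M" "good \<omega>" "T \<in> PK" "S \<in> PK"
  shows "\<omega> \<in> Ep T S \<longleftrightarrow> T = pT \<omega> \<and> S = pS \<omega>"
proof
  assume e: "\<omega> \<in> Ep T S"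
  show "T = pT \<omega> \<and> S = pS \<omega>"
  proof
    show "T = pT \<omega>" using e by (intro ext2 assms pT_PK) (auto simp: Ep_def pT_def)
    show "S = pS \<omega>" using e by (intro ext2 assms pS_PK) (auto simp: Ep_def pS_def)
  qed
next
  assume "T = pT \<omega> \<and> S = pS \<omega>"
  then show "\<omega> \<in> Ep T S" using assms(1) by (auto simp: Ep_def pT_def pS_def)
qed

lemma Bc_iff:
  assumes "\<omega> \<in> space M" "good \<omega>" "\<tau> \<in> PP" "\<sigma> \<in> PP"
  shows "\<omega> \<in> Bc \<tau> \<sigma> \<longleftrightarrow> \<tau> = c\<tau> \<omega> \<and> \<sigma> = c\<sigma> \<omega>"
proof
  assume e: "\<omega> \<in> Bc \<tau> \<sigma>"
  show "\<tau> = c\<tau> \<omega> \<and> \<sigma> = c\<sigma> \<omega>"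
  proof
    show "\<tau> = c\<tau> \<omega>" using e by (intro ext1 assms c\<tau>_PP) (auto simp: Bc_def c\<tau>_def)
    show "\<sigma> = c\<sigma> \<omega>" using e by (intro ext1 assms c\<sigma>_PP) (auto simp: Bc_def c\<sigma>_def)
  qed
next
  assume "\<tau> = c\<tau> \<omega> \<and> \<sigma> = c\<sigma> \<omega>"
  then show "\<omega> \<in> Bc \<tau> \<sigma>" using assms(1) by (auto simp: Bc_def c\<tau>_def c\<sigma>_def)
qed

lemma steq_k: "steq n (gtsaga n m W G \<alpha> x0 (\<lambda>t i. tau t i \<omega>) (\<lambda>t i. s t i \<omega>) k) (gtsaga n m W G \<alpha> x0 (pT \<omega>) (pS \<omega>) k)"
  by (intro gtsaga_cong) (simp add: pT_def pS_def)

lemma Y_eq: "Y \<omega> = \<Phi> (pT \<omega>) (pS \<omega>) (c\<tau> \<omega>) (c\<sigma> \<omega>)"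
  unfolding Y_def \<Phi>_def gt_t_eq gtsaga_Suc2
  by (intro tt_cong stp_cong steq_k) (simp add: c\<tau>_def c\<sigma>_def)


lemma pT_eq_iff:
  assumes "T \<in> PiE {..<k} (\<lambda>_. PiE {..<n} (\<lambda>_. UNIV))"
  shows "pT \<omega> = T \<longleftrightarrow> (\<forall>t<k. \<forall>i<n. tau t i \<omega> = T t i)"
proof
  assume "pT \<omega> = T" then show "\<forall>t<k. \<forall>i<n. tau t i \<omega> = T t i" by (auto simp: pT_def)
next
  assume h: "\<forall>t<k. \<forall>i<n. tau t i \<omega> = T t i"
  show "pT \<omega> = T"
  proof (rule ext)
    fix t show "pT \<omega> t = T t"
    proof (cases "t < k")
      case True
      then have Tt: "T t \<in> PiE {..<n} (\<lambda>_. UNIV)" using assms by auto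
      show ?thesis
      proof (rule ext)
        fix i show "pT \<omega> t i = T t i"
        proof (cases "i < n")
          case True2: True
          have "pT \<omega> t i = tau t i \<omega>" using True True2 unfolding pT_def by simp
          also have "\<dots> = T t i" using h True True2 by blast
          finally show ?thesis .
        next
          case False
          then have "T t i = undefined" using Tt by (intro PiE_arb[OF Tt]) simp
          moreover have "pT \<omega> t i = undefined" using False True unfolding pT_def by simp
          ultimately show ?thesis by simp
        qed
      qed
    next
      case False
      then have "T t = undefined" by (intro PiE_arb[OF assms]) simp
      moreover have "pT \<omega> t = undefined" using False unfolding pT_def by simp
      ultimately show ?thesis by simp
    qed
  qed
qed

lemma pS_eq_iff:
  assumes "T \<in> PiE {..<k} (\<lambda>_. PiE {..<n} (\<lambda>_. UNIV))"
  shows "pS \<omega> = T \<longleftrightarrow> (\<forall>t<k. \<forall>i<n. s t i \<omega> = T t i)"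
proof
  assume "pS \<omega> = T" then show "\<forall>t<k. \<forall>i<n. s t i \<omega> = T t i" by (auto simp: pS_def)
next
  assume h: "\<forall>t<k. \<forall>i<n. s t i \<omega> = T t i"
  show "pS \<omega> = T"
  proof (rule ext)
    fix t show "pS \<omega> t = T t"
    proof (cases "t < k")
      case True
      then have Tt: "T t \<in> PiE {..<n} (\<lambda>_. UNIV)" using assms by auto
      show ?thesis
      proof (rule ext)
        fix i show "pS \<omega> t i = T t i"
        proof (cases "i < n")
          case True2: True
          have "pS \<omega> t i = s t i \<omega>" using True True2 unfolding pS_def by simp
          also have "\<dots> = T t i" using h True True2 by blast
          finally show ?thesis .
        next
          case False
          then have "T t i = undefined" using Tt by (intro PiE_arb[OF Tt]) simp
          moreover have "pS \<omega> t i = undefined" using False True unfolding pS_def by simp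
          ultimately show ?thesis by simp
        qed
      qed
    next
      case False
      then have "T t = undefined" by (intro PiE_arb[OF assms]) simp
      moreover have "pS \<omega> t = undefined" using False unfolding pS_def by simp
      ultimately show ?thesis by simp
    qed
  qed
qed

lemma c\<tau>_eq_iff:
  assumes a: "\<tau> \<in> PiE {..<n} (\<lambda>_. UNIV)"
  shows "c\<tau> \<omega> = \<tau> \<longleftrightarrow> (\<forall>i<n. tau k i \<omega> = \<tau> i)"
proof
  assume e: "c\<tau> \<omega> = \<tau>"
  show "\<forall>i<n. tau k i \<omega> = \<tau> i"
  proof (intro allI impI)
    fix i assume "i < n"
    then have "c\<tau> \<omega> i = tau k i \<omega>" unfolding c\<tau>_def by simp
    then show "tau k i \<omega> = \<tau> i" using e by simp
  qed
next
  assume h: "\<forall>i<n. tau k i \<omega> = \<tau> i"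
  show "c\<tau> \<omega> = \<tau>"
  proof (rule ext)
    fix i show "c\<tau> \<omega> i = \<tau> i"
    proof (cases "i < n")
      case True
      then have "c\<tau> \<omega> i = tau k i \<omega>" unfolding c\<tau>_def by simp
      then show ?thesis using h True by simp
    next
      case False
      then have "\<tau> i = undefined" by (intro PiE_arb[OF a]) simp
      moreover have "c\<tau> \<omega> i = undefined" using False unfolding c\<tau>_def by simp
      ultimately show ?thesis by simp
    qed
  qed
qed
lemma c\<sigma>_eq_iff:
  assumes a: "\<tau> \<in> PiE {..<n} (\<lambda>_. UNIV)"
  shows "c\<sigma> \<omega> = \<tau> \<longleftrightarrow> (\<forall>i<n. s k i \<omega> = \<tau> i)"
proof
  assume e: "c\<sigma> \<omega> = \<tau>"
  show "\<forall>i<n. s k i \<omega> = \<tau> i"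
  proof (intro allI impI)
    fix i assume "i < n"
    then have "c\<sigma> \<omega> i = s k i \<omega>" unfolding c\<sigma>_def by simp
    then show "s k i \<omega> = \<tau> i" using e by simp
  qed
next
  assume h: "\<forall>i<n. s k i \<omega> = \<tau> i"
  show "c\<sigma> \<omega> = \<tau>"
  proof (rule ext)
    fix i show "c\<sigma> \<omega> i = \<tau> i"
    proof (cases "i < n")
      case True
      then have "c\<sigma> \<omega> i = s k i \<omega>" unfolding c\<sigma>_def by simp
      then show ?thesis using h True by simp
    next
      case False
      then have "\<tau> i = undefined" by (intro PiE_arb[OF a]) simp
      moreover have "c\<sigma> \<omega> i = undefined" using False unfolding c\<sigma>_def by simp
      ultimately show ?thesis by simp
    qed
  qed
qed

lemma Y_meas: "Y \<in> borel_measurable M"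
proof -
  define Aa where "Aa = PiE {..<k} (\<lambda>_. PiE {..<n} (\<lambda>_. UNIV :: nat set))"
  define Ab where "Ab = PiE {..<n} (\<lambda>_. UNIV :: nat set)"
  define R where "R \<omega> = ((pT \<omega>, pS \<omega>), (c\<tau> \<omega>, c\<sigma> \<omega>))" for \<omega>
  have cA: "countable ((Aa \<times> Aa) \<times> (Ab \<times> Ab))"
    unfolding Aa_def Ab_def by (intro countable_SIGMA countable_PiE) auto
  have "R \<in> M \<rightarrow>\<^sub>M count_space ((Aa \<times> Aa) \<times> (Ab \<times> Ab))"
  proof (subst measurable_count_space_eq_countable[OF cA], safe)
    fix \<omega> assume "\<omega> \<in> space M"
    show "R \<omega> \<in> (Aa \<times> Aa) \<times> (Ab \<times> Ab)"
      by (auto simp: R_def Aa_def Ab_def pT_def pS_def c\<tau>_def c\<sigma>_def)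
  next
    fix T S \<tau> \<sigma> assume h: "T \<in> Aa" "S \<in> Aa" "\<tau> \<in> Ab" "\<sigma> \<in> Ab"
    have "R -` {((T, S), (\<tau>, \<sigma>))} \<inter> space M = Ep T S \<inter> Bc \<tau> \<sigma>"
      using h unfolding Aa_def Ab_def
      by (auto simp: R_def Ep_def Bc_def pT_eq_iff pS_eq_iff c\<tau>_eq_iff c\<sigma>_eq_iff)
    then show "R -` {((T, S), (\<tau>, \<sigma>))} \<inter> space M \<in> sets M"
      using Ep_M Bc_M by auto
  qed
  moreover have "(\<lambda>((T, S), (\<tau>, \<sigma>)). \<Phi> T S \<tau> \<sigma>) \<in> borel_measurable (count_space ((Aa \<times> Aa) \<times> (Ab \<times> Ab)))"
    by (rule borel_measurable_count_space)
  ultimately have "(\<lambda>\<omega>. (\<lambda>((T, S), (\<tau>, \<sigma>)). \<Phi> T S \<tau> \<sigma>) (R \<omega>)) \<in> borel_measurable M"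
    by (rule measurable_compose)
  moreover have "(\<lambda>\<omega>. (\<lambda>((T, S), (\<tau>, \<sigma>)). \<Phi> T S \<tau> \<sigma>) (R \<omega>)) = Y"
    by (auto simp: R_def Y_eq)
  ultimately show ?thesis by simp
qed

lemma AE_good: "AE \<omega> in M. good \<omega>"
proof -
  have t: "AE \<omega> in M. tau t i \<omega> < m" if i: "i < n" for t i
  proof -
    have "{\<omega> \<in> space M. tau t i \<omega> < m} = (\<Union>j\<in>{..<m}. {\<omega> \<in> space M. tau t i \<omega> = j})" by auto
    have "prob {\<omega> \<in> space M. tau t i \<omega> < m} = (\<Sum>j\<in>{..<m}. prob {\<omega> \<in> space M. tau t i \<omega> = j})"
    proof -
      have "prob (\<Union>j\<in>{..<m}. {\<omega> \<in> space M. tau t i \<omega> = j}) = (\<Sum>j\<in>{..<m}. prob {\<omega> \<in> space M. tau t i \<omega> = j})"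
        by (rule finite_measure_finite_Union) (auto simp: disjoint_family_on_def intro: ev_tau i)
      then show ?thesis using \<open>{\<omega> \<in> space M. tau t i \<omega> < m} = _\<close> by simp
    qed
    also have "\<dots> = 1" using i m by (simp add: unif_tau)
    finally show ?thesis using i by (subst prob_Collect_eq_1[symmetric]) (auto intro: ev_tau)
  qed
  have s: "AE \<omega> in M. s t i \<omega> < m" if i: "i < n" for t i
  proof -
    have "{\<omega> \<in> space M. s t i \<omega> < m} = (\<Union>j\<in>{..<m}. {\<omega> \<in> space M. s t i \<omega> = j})" by auto
    have "prob {\<omega> \<in> space M. s t i \<omega> < m} = (\<Sum>j\<in>{..<m}. prob {\<omega> \<in> space M. s t i \<omega> = j})"
    proof -
      have "prob (\<Union>j\<in>{..<m}. {\<omega> \<in> space M. s t i \<omega> = j}) = (\<Sum>j\<in>{..<m}. prob {\<omega> \<in> space M. s t i \<omega> = j})"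
        by (rule finite_measure_finite_Union) (auto simp: disjoint_family_on_def intro: ev_s i)
      then show ?thesis using \<open>{\<omega> \<in> space M. s t i \<omega> < m} = _\<close> by simp
    qed
    also have "\<dots> = 1" using i m by (simp add: unif_s)
    finally show ?thesis using i by (subst prob_Collect_eq_1[symmetric]) (auto intro: ev_s)
  qed
  have "AE \<omega> in M. \<forall>p\<in>{..k} \<times> {..<n}. tau (fst p) (snd p) \<omega> < m \<and> s (fst p) (snd p) \<omega> < m"
    by (subst AE_finite_all) (auto intro!: AE_conjI t s)
  then show ?thesis by (simp add: good_def)
qed

end




context gts begin

lemma prob_Bc:
  assumes \<tau>: "\<tau> \<in> PP" and \<sigma>: "\<sigma> \<in> PP"
  shows "prob (Bc \<tau> \<sigma>) = (1 / real m) ^ (2 * n)"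
proof -
  define L where "L = (UNIV :: bool set) \<times> {k} \<times> {..<n}"
  have ind: "indep_sets (\<lambda>j. sigma_sets (space M) {X j -` A \<inter> space M | A. A \<in> sets (count_space UNIV)}) (UNIV \<times> UNIV \<times> {..<n})"
    using indep unfolding indep_vars_def by blast
  define f where "f j = (case j of (b, t, i) \<Rightarrow> if b then \<tau> i else \<sigma> i)" for j :: "bool \<times> nat \<times> nat"
  define AA where "AA j = X j -` {f j} \<inter> space M" for j
  have L0: "(True, k, 0) \<in> L" using n by (auto simp: L_def)
  have "prob (\<Inter>j\<in>L. AA j) = (\<Prod>j\<in>L. prob (AA j))"
    by (rule indep_setsD[OF ind]) (use L0 in \<open>auto simp: L_def AA_def\<close>)
  moreover have "(\<Inter>j\<in>L. AA j) = Bc \<tau> \<sigma>"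
  proof
    show "(\<Inter>j\<in>L. AA j) \<subseteq> Bc \<tau> \<sigma>"
    proof
      fix \<omega> assume a: "\<omega> \<in> (\<Inter>j\<in>L. AA j)"
      have "\<omega> \<in> AA (True, k, 0)" using a L0 by blast
      then have "\<omega> \<in> space M" by (simp add: AA_def)
      moreover have "tau k i \<omega> = \<tau> i \<and> s k i \<omega> = \<sigma> i" if "i < n" for i
      proof -
        have "(True, k, i) \<in> L" "(False, k, i) \<in> L" using that by (auto simp: L_def)
        then have "\<omega> \<in> AA (True, k, i)" "\<omega> \<in> AA (False, k, i)" using a by blast+
        then show ?thesis by (simp add: AA_def f_def)
      qed
      ultimately show "\<omega> \<in> Bc \<tau> \<sigma>" by (auto simp: Bc_def)
    qed
    show "Bc \<tau> \<sigma> \<subseteq> (\<Inter>j\<in>L. AA j)"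
      by (auto simp: Bc_def AA_def L_def f_def)
  qed
  moreover have "prob (AA j) = 1 / real m" if j: "j \<in> L" for j
  proof -
    obtain b i where bi: "j = (b, k, i)" "i < n" using j by (auto simp: L_def)
    show ?thesis
    proof (cases b)
      case True
      then have "AA j = {\<omega> \<in> space M. tau k i \<omega> = \<tau> i}" by (auto simp: AA_def bi f_def)
      moreover have "\<tau> i < m" using \<tau> bi by (auto simp: PP_def)
      ultimately show ?thesis using unif_tau bi by simp
    next
      case False
      then have "AA j = {\<omega> \<in> space M. s k i \<omega> = \<sigma> i}" by (auto simp: AA_def bi f_def)
      moreover have "\<sigma> i < m" using \<sigma> bi by (auto simp: PP_def)
      ultimately show ?thesis using unif_s bi by simp
    qed
  qed
  moreover have "card L = 2 * n" by (simp add: L_def card_cartesian_product card_UNIV_bool)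
  ultimately show ?thesis by simp
qed

lemma indep_F_Bc:
  assumes E: "E \<in> sets F"
  shows "prob (E \<inter> Bc \<tau> \<sigma>) = prob E * prob (Bc \<tau> \<sigma>)"
proof -
  define K where "K = (UNIV :: bool set) \<times> {..<k} \<times> {..<n}"
  define L where "L = (UNIV :: bool set) \<times> {k} \<times> {..<n}"
  define V1 where "V1 \<omega> = restrict (\<lambda>j. X j \<omega>) K" for \<omega>
  define V2 where "V2 \<omega> = restrict (\<lambda>j. X j \<omega>) L" for \<omega>
  have iv: "indep_var (PiM K (\<lambda>_. count_space UNIV)) V1 (PiM L (\<lambda>_. count_space UNIV)) V2"
    unfolding V1_def V2_def by (rule indep_var_restrict[OF indep]) (auto simp: K_def L_def)
  then have isd: "indep_set (sigma_sets (space M) {V1 -` A \<inter> space M | A. A \<in> sets (PiM K (\<lambda>_. count_space UNIV))})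
                        (sigma_sets (space M) {V2 -` A \<inter> space M | A. A \<in> sets (PiM L (\<lambda>_. count_space UNIV))})"
    unfolding indep_var_eq by blast
  have E1: "E \<in> sigma_sets (space M) {V1 -` A \<inter> space M | A. A \<in> sets (PiM K (\<lambda>_. count_space UNIV))}"
  proof -
    have "gensF \<subseteq> sigma_sets (space M) {V1 -` A \<inter> space M | A. A \<in> sets (PiM K (\<lambda>_. count_space UNIV))}"
    proof
      fix Z assume "Z \<in> gensF"
      then obtain Zf A t i where Z: "Z = Zf -` A \<inter> space M" "t < k" "i < n" "Zf = tau t i \<or> Zf = s t i"
        unfolding gensF_def by blast
      define b where "b = (Zf = tau t i)"
      have bK: "(b, t, i) \<in> K" using Z by (auto simp: K_def)
      have Xb: "X (b, t, i) = Zf" using Z by (auto simp: b_def)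
      define B where "B = (\<lambda>v. v (b, t, i)) -` A \<inter> space (PiM K (\<lambda>_. count_space UNIV))"
      have B: "B \<in> sets (PiM K (\<lambda>_. count_space UNIV))"
        unfolding B_def by (rule measurable_sets[OF measurable_component_singleton[OF bK]]) simp
      have "V1 -` B \<inter> space M = Z"
        using bK Xb unfolding B_def V1_def Z(1) by (auto simp: space_PiM)
      then show "Z \<in> sigma_sets (space M) {V1 -` A \<inter> space M | A. A \<in> sets (PiM K (\<lambda>_. count_space UNIV))}"
        using B by blast
    qed
    then show ?thesis using E unfolding sets_F by (blast dest: sigma_sets_mono)
  qed
  define f where "f = restrict (\<lambda>j. case j of (b, t, i) \<Rightarrow> if b then \<tau> i else \<sigma> i) L"
  have fs: "{f} \<in> sets (PiM L (\<lambda>_. count_space UNIV))"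
  proof -
    have "{f} = PiE L (\<lambda>j. {f j})" by (auto simp: f_def PiE_def extensional_def Pi_def)
    moreover have "PiE L (\<lambda>j. {f j}) \<in> sets (PiM L (\<lambda>_. count_space UNIV))"
      by (rule sets_PiM_I_finite) (auto simp: L_def)
    ultimately show ?thesis by simp
  qed
  have "V2 -` {f} \<inter> space M = Bc \<tau> \<sigma>"
  proof (intro set_eqI iffI)
    fix \<omega> assume "\<omega> \<in> V2 -` {f} \<inter> space M"
    then have e: "V2 \<omega> = f" and sp: "\<omega> \<in> space M" by auto
    have "tau k i \<omega> = \<tau> i \<and> s k i \<omega> = \<sigma> i" if "i < n" for i
    proof -
      have "(True, k, i) \<in> L" "(False, k, i) \<in> L" using that by (auto simp: L_def)
      then have "V2 \<omega> (True, k, i) = f (True, k, i)" "V2 \<omega> (False, k, i) = f (False, k, i)" using e by auto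
      then show ?thesis using \<open>(True, k, i) \<in> L\<close> \<open>(False, k, i) \<in> L\<close> by (simp add: V2_def f_def)
    qed
    then show "\<omega> \<in> Bc \<tau> \<sigma>" using sp by (auto simp: Bc_def)
  next
    fix \<omega> assume b: "\<omega> \<in> Bc \<tau> \<sigma>"
    have "V2 \<omega> = f"
    proof (rule ext)
      fix j show "V2 \<omega> j = f j"
      proof (cases "j \<in> L")
        case True
        then obtain bb i where j: "j = (bb, k, i)" "i < n" by (auto simp: L_def)
        then show ?thesis using b True by (cases bb) (auto simp: V2_def f_def Bc_def)
      next
        case False then show ?thesis by (simp add: V2_def f_def)
      qed
    qed
    then show "\<omega> \<in> V2 -` {f} \<inter> space M" using b by (auto simp: Bc_def)
  qed
  then have E2: "Bc \<tau> \<sigma> \<in> sigma_sets (space M) {V2 -` A \<inter> space M | A. A \<in> sets (PiM L (\<lambda>_. count_space UNIV))}"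
    using fs by (metis (mono_tags, lifting) mem_Collect_eq sigma_sets.Basic)
  show ?thesis by (rule indep_setD[OF isd E1 E2])
qed

lemma fin_PP: "finite PP" and fin_PK: "finite PK"
  unfolding PK_def PP_def by (auto intro!: finite_PiE)

definition "QQ = (PK \<times> PK) \<times> (PP \<times> PP)"
definition "EE = (\<lambda>((T, S), (\<tau>, \<sigma>)). Ep T S \<inter> Bc \<tau> \<sigma>)"
definition "\<Phi>q = (\<lambda>((T, S), (\<tau>, \<sigma>)). \<Phi> T S \<tau> \<sigma>)"
definition "Ysum \<omega> = (\<Sum>q\<in>QQ. indicator (EE q) \<omega> * \<Phi>q q)"
definition "cc = (\<lambda>(T, S). \<Sum>\<tau>\<in>PP. \<Sum>\<sigma>\<in>PP. (1 / real m) ^ (2 * n) * \<Phi> T S \<tau> \<sigma>)"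
definition "C \<omega> = (\<Sum>p\<in>PK \<times> PK. indicator (case p of (T, S) \<Rightarrow> Ep T S) \<omega> * cc p)"

lemma fin_QQ: "finite QQ" unfolding QQ_def using fin_PP fin_PK by auto

lemma EE_M: "EE q \<in> sets M"
  unfolding EE_def using Ep_M Bc_M by (auto split: prod.split)

lemma Ysum_eq:
  assumes sp: "\<omega> \<in> space M" and g: "good \<omega>"
  shows "Ysum \<omega> = Y \<omega>"
proof -
  define q0 where "q0 = ((pT \<omega>, pS \<omega>), (c\<tau> \<omega>, c\<sigma> \<omega>))"
  have q0: "q0 \<in> QQ" using g by (simp add: q0_def QQ_def pT_PK pS_PK c\<tau>_PP c\<sigma>_PP)
  have ind: "indicator (EE q) \<omega> * \<Phi>q q = (if q = q0 then \<Phi>q q else 0)" if q: "q \<in> QQ" for q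
  proof -
    obtain T S \<tau> \<sigma> where qq: "q = ((T, S), (\<tau>, \<sigma>))" "T \<in> PK" "S \<in> PK" "\<tau> \<in> PP" "\<sigma> \<in> PP"
      using q unfolding QQ_def by auto
    have "\<omega> \<in> EE q \<longleftrightarrow> q = q0"
      using Ep_iff[OF sp g qq(2,3)] Bc_iff[OF sp g qq(4,5)] by (auto simp: EE_def qq(1) q0_def)
    then show ?thesis by (simp add: indicator_def)
  qed
  have "Ysum \<omega> = (\<Sum>q\<in>QQ. if q = q0 then \<Phi>q q else 0)"
    unfolding Ysum_def by (intro sum.cong refl ind)
  also have "\<dots> = \<Phi>q q0" using q0 fin_QQ by (simp add: sum.delta')
  also have "\<dots> = Y \<omega>" by (simp add: q0_def \<Phi>q_def Y_eq)
  finally show ?thesis .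
qed

lemma AE_Ysum: "AE \<omega> in M. Y \<omega> = Ysum \<omega>"
  using AE_good by (rule AE_mp) (auto intro!: AE_I2 simp: Ysum_eq)

lemma Ysum_int: "integrable M Ysum"
  unfolding Ysum_def
  by (intro Bochner_Integration.integrable_sum integrable_mult_left integrable_real_indicator) (use fin_QQ EE_M in \<open>auto simp: emeasure_eq_measure\<close>)

lemma Y_int: "integrable M Y"
  using integrable_cong_AE[OF Y_meas borel_measurable_integrable[OF Ysum_int] AE_Ysum] Ysum_int by simp

lemma C_meas: "C \<in> borel_measurable F"
  unfolding C_def
  by (intro borel_measurable_sum borel_measurable_times borel_measurable_indicator borel_measurable_const) (use Ep_F in \<open>auto split: prod.split\<close>)

lemma C_int: "integrable M C"
  unfolding C_def
  by (intro Bochner_Integration.integrable_sum integrable_mult_left integrable_real_indicator) (use fin_PK Ep_M in \<open>auto simp: emeasure_eq_measure split: prod.split\<close>)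

lemma int_ind_sum:
  assumes "finite I" "\<And>i. i \<in> I \<Longrightarrow> E i \<in> sets M" "A \<in> sets M"
  shows "(\<integral>x. indicator A x * (\<Sum>i\<in>I. indicator (E i) x * c i) \<partial>M) = (\<Sum>i\<in>I. c i * prob (A \<inter> E i))"
proof -
  have "(\<lambda>x. indicator A x * (\<Sum>i\<in>I. indicator (E i) x * c i)) = (\<lambda>x. \<Sum>i\<in>I. c i * indicator (A \<inter> E i) x)"
    by (auto simp: sum_distrib_left indicator_inter_arith intro!: ext sum.cong)
  moreover have "(\<integral>x. (\<Sum>i\<in>I. c i * indicator (A \<inter> E i) x) \<partial>M) = (\<Sum>i\<in>I. \<integral>x. c i * indicator (A \<inter> E i) x \<partial>M)"
    by (intro Bochner_Integration.integral_sum integrable_mult_right integrable_real_indicator) (use assms in \<open>auto simp: emeasure_eq_measure\<close>)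
  moreover have "A \<inter> E i \<inter> space M = A \<inter> E i" for i
    using sets.sets_into_space[OF assms(3)] by auto
  ultimately show ?thesis by simp
qed

lemma cond_C: "AE \<omega> in M. real_cond_exp M F Y \<omega> = C \<omega>"
proof -
  interpret sfs: sigma_finite_subalgebra M F by (rule sfs)
  show ?thesis
  proof (rule sfs.real_cond_exp_charact)
    fix A assume A: "A \<in> sets F"
    then have AM: "A \<in> sets M" using subalg unfolding subalgebra_def by auto
    have "(\<integral>x\<in>A. Y x \<partial>M) = (\<integral>x. indicator A x * Ysum x \<partial>M)"
      unfolding set_lebesgue_integral_def
    proof (rule integral_cong_AE)
      show "(\<lambda>x. indicat_real A x *\<^sub>R Y x) \<in> borel_measurable M"
        using Y_meas AM by measurable
      show "(\<lambda>x. indicat_real A x * Ysum x) \<in> borel_measurable M"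
        using borel_measurable_integrable[OF Ysum_int] AM by measurable
      show "AE x in M. indicat_real A x *\<^sub>R Y x = indicat_real A x * Ysum x"
        using AE_Ysum by eventually_elim simp
    qed
    also have "\<dots> = (\<Sum>q\<in>QQ. \<Phi>q q * prob (A \<inter> EE q))"
      unfolding Ysum_def by (rule int_ind_sum[OF fin_QQ EE_M AM])
    also have "\<dots> = (\<Sum>p\<in>PK \<times> PK. \<Sum>r\<in>PP \<times> PP. \<Phi>q (p, r) * prob (A \<inter> EE (p, r)))"
      unfolding QQ_def by (simp add: sum.cartesian_product)
    also have "\<dots> = (\<Sum>p\<in>PK \<times> PK. cc p * prob (A \<inter> (case p of (T, S) \<Rightarrow> Ep T S)))"
    proof (intro sum.cong refl)
      fix p assume p: "p \<in> PK \<times> PK"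
      obtain T S where TS: "p = (T, S)" by (cases p) auto
      have AE: "A \<inter> Ep T S \<in> sets F" using A Ep_F by auto
      have "(\<Sum>r\<in>PP \<times> PP. \<Phi>q (p, r) * prob (A \<inter> EE (p, r))) =
            (\<Sum>r\<in>PP \<times> PP. ((1 / real m) ^ (2 * n) * \<Phi>q (p, r)) * prob (A \<inter> Ep T S))"
      proof (intro sum.cong refl)
        fix r assume r: "r \<in> PP \<times> PP"
        obtain \<tau> \<sigma> where ts: "r = (\<tau>, \<sigma>)" "\<tau> \<in> PP" "\<sigma> \<in> PP" using r by auto
        have "A \<inter> EE (p, r) = (A \<inter> Ep T S) \<inter> Bc \<tau> \<sigma>" by (auto simp: EE_def TS ts)
        then have "prob (A \<inter> EE (p, r)) = prob (A \<inter> Ep T S) * (1 / real m) ^ (2 * n)"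
          using indep_F_Bc[OF AE] prob_Bc[OF ts(2,3)] by simp
        then show "\<Phi>q (p, r) * prob (A \<inter> EE (p, r)) = ((1 / real m) ^ (2 * n) * \<Phi>q (p, r)) * prob (A \<inter> Ep T S)"
          by simp
      qed
      also have "\<dots> = (\<Sum>r\<in>PP \<times> PP. (1 / real m) ^ (2 * n) * \<Phi>q (p, r)) * prob (A \<inter> Ep T S)"
        by (simp add: sum_distrib_right)
      also have "(\<Sum>r\<in>PP \<times> PP. (1 / real m) ^ (2 * n) * \<Phi>q (p, r)) = cc p"
        unfolding cc_def TS \<Phi>q_def by (simp add: sum.cartesian_product) (intro sum.cong refl, auto)
      finally show "(\<Sum>r\<in>PP \<times> PP. \<Phi>q (p, r) * prob (A \<inter> EE (p, r))) = cc p * prob (A \<inter> (case p of (T, S) \<Rightarrow> Ep T S))"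
        by (simp add: TS)
    qed
    also have "\<dots> = (\<integral>x. indicator A x * C x \<partial>M)"
      unfolding C_def by (rule int_ind_sum[symmetric]) (use fin_PK Ep_M AM in \<open>auto split: prod.split\<close>)
    also have "\<dots> = (\<integral>x\<in>A. C x \<partial>M)"
      unfolding set_lebesgue_integral_def by simp
    finally show "(\<integral>x\<in>A. Y x \<partial>M) = (\<integral>x\<in>A. C x \<partial>M)" .
  qed (auto intro: Y_int C_int C_meas)
qed

end




context gts begin

lemma C_good:
  assumes sp: "\<omega> \<in> space M" and g: "good \<omega>"
  shows "C \<omega> = cc (pT \<omega>, pS \<omega>)"
proof -
  have "C \<omega> = (\<Sum>p\<in>PK \<times> PK. if p = (pT \<omega>, pS \<omega>) then cc p else 0)"
    unfolding C_def
  proof (intro sum.cong refl)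
    fix p assume p: "p \<in> PK \<times> PK"
    obtain T S where TS: "p = (T, S)" "T \<in> PK" "S \<in> PK" using p by auto
    show "indicator (case p of (T, S) \<Rightarrow> Ep T S) \<omega> * cc p = (if p = (pT \<omega>, pS \<omega>) then cc p else 0)"
      using Ep_iff[OF sp g TS(2,3)] by (auto simp: TS(1) indicator_def)
  qed
  also have "\<dots> = cc (pT \<omega>, pS \<omega>)"
    using fin_PK pT_PK[OF g] pS_PK[OF g] by (simp add: sum.delta')
  finally show ?thesis .
qed

theorem main_loc:
  assumes W: "\<And>r. r < n \<Longrightarrow> (\<Sum>i<n. W i r) = 1"
    and smooth: "\<And>i j a b. i < n \<Longrightarrow> j < m \<Longrightarrow> norm (G i j a - G i j b) \<le> L * norm (a - b)"
    and L: "L > 0"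
    and al: "\<alpha>\<^sup>2 * L\<^sup>2 \<le> real n / (8 * real m)"
  shows "AE \<omega> in M. real_cond_exp M F Y \<omega>
     \<le> 2 * gt_t n m W G \<alpha> x0 (\<lambda>t i. tau t i \<omega>) (\<lambda>t i. s t i \<omega>) k
       + 3 * \<alpha>\<^sup>2 * (norm (avg_grad n m G (gt_x n m W G \<alpha> x0 (\<lambda>t i. tau t i \<omega>) (\<lambda>t i. s t i \<omega>) k)))\<^sup>2
       + 9 / (4 * real m * real n) * consensus_err n (gt_x n m W G \<alpha> x0 (\<lambda>t i. tau t i \<omega>) (\<lambda>t i. s t i \<omega>) k)"
  using cond_C AE_good AE_space
proof (eventually_elim)
  case (elim \<omega>)
  have sp: "\<omega> \<in> space M" using elim by simp
  obtain x y gp z where e: "gtsaga n m W G \<alpha> x0 (pT \<omega>) (pS \<omega>) k = (x, y, gp, z)"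
    by (cases "gtsaga n m W G \<alpha> x0 (pT \<omega>) (pS \<omega>) k") auto
  have "inv_st n (gtsaga n m W G \<alpha> x0 (pT \<omega>) (pS \<omega>) k)" by (rule gtsaga_inv[OF W])
  then have inv: "inv_st n (x, y, gp, z)" using e by simp
  have st: "steq n (gtsaga n m W G \<alpha> x0 (\<lambda>t i. tau t i \<omega>) (\<lambda>t i. s t i \<omega>) k) (x, y, gp, z)"
    using steq_k[of \<omega>] e by simp
  have gx: "gt_x n m W G \<alpha> x0 (\<lambda>t i. tau t i \<omega>) (\<lambda>t i. s t i \<omega>) k = x"
    using st by (simp add: gt_x_def steq_def)
  have gt: "gt_t n m W G \<alpha> x0 (\<lambda>t i. tau t i \<omega>) (\<lambda>t i. s t i \<omega>) k = tt n m (x, y, gp, z)"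
    unfolding gt_t_eq using tt_cong[OF st] .
  have "real_cond_exp M F Y \<omega> = cc (pT \<omega>, pS \<omega>)" using elim C_good[OF sp] by simp
  also have "\<dots> = (\<Sum>\<tau>\<in>PiE {..<n} (\<lambda>_. {..<m}). \<Sum>\<sigma>\<in>PiE {..<n} (\<lambda>_. {..<m}).
            (1 / real m) ^ (2 * n) * tt n m (stp n m W G \<alpha> (x, y, gp, z) \<tau> \<sigma>))"
    by (simp add: cc_def \<Phi>_def e PP_def)
  also have "\<dots> \<le> 2 * tt n m (x, y, gp, z) + 3 * \<alpha>\<^sup>2 * (norm (avg_grad n m G x))\<^sup>2
       + 9 / (4 * real m * real n) * consensus_err n x"
    by (rule core[OF n m W inv smooth L al])
  finally show ?case unfolding gx gt .
qed

end

theorem corollary2: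
  fixes n m :: nat and L \<alpha> :: real
    and f :: "nat \<Rightarrow> nat \<Rightarrow> 'v::euclidean_space \<Rightarrow> real"
    and G :: "nat \<Rightarrow> nat \<Rightarrow> 'v \<Rightarrow> 'v"
    and W :: "nat \<Rightarrow> nat \<Rightarrow> real"
    and x0 :: 'v
    and M :: "'w measure"
    and tau s :: "nat \<Rightarrow> nat \<Rightarrow> 'w \<Rightarrow> nat"
  assumes n: "n \<ge> 1" and m: "m \<ge> 1"
    and grad: "\<And>i j x. i < n \<Longrightarrow> j < m \<Longrightarrow> (f i j has_derivative (\<lambda>h. G i j x \<bullet> h)) (at x)"
    and L: "L > 0"
    and smooth: "\<And>i j x y. i < n \<Longrightarrow> j < m \<Longrightarrow> norm (G i j x - G i j y) \<le> L * norm (x - y)"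
    and Fbdd: "bdd_below (range (\<lambda>x. (1 / real n) * (\<Sum>i<n. (1 / real m) * (\<Sum>j<m. f i j x))))"
    and Wnn: "\<And>i r. i < n \<Longrightarrow> r < n \<Longrightarrow> W i r \<ge> 0"
    and Wprim: "primitive_mat n W"
    and Wds: "doubly_stochastic n W"
    and prob: "prob_space M"
    and indep: "prob_space.indep_vars M (\<lambda>_. count_space UNIV)
                  (\<lambda>(b, k, i). if b then tau k i else s k i) (UNIV \<times> UNIV \<times> {..<n})"
    and unif_tau: "\<And>k i j. i < n \<Longrightarrow> j < m \<Longrightarrow> measure M {\<omega> \<in> space M. tau k i \<omega> = j} = 1 / real m"
    and unif_s: "\<And>k i j. i < n \<Longrightarrow> j < m \<Longrightarrow> measure M {\<omega> \<in> space M. s k i \<omega> = j} = 1 / real m"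
    and alpha: "0 < \<alpha>" "\<alpha> \<le> sqrt (real n) / (sqrt (8 * real m) * L)"
  shows "AE \<omega> in M.
     real_cond_exp M (filt M n tau s k)
        (\<lambda>\<omega>. gt_t n m W G \<alpha> x0 (\<lambda>t i. tau t i \<omega>) (\<lambda>t i. s t i \<omega>) (Suc k)) \<omega>
     \<le> 2 * gt_t n m W G \<alpha> x0 (\<lambda>t i. tau t i \<omega>) (\<lambda>t i. s t i \<omega>) k
       + 3 * \<alpha>\<^sup>2 * (norm (avg_grad n m G (gt_x n m W G \<alpha> x0 (\<lambda>t i. tau t i \<omega>) (\<lambda>t i. s t i \<omega>) k)))\<^sup>2
       + 9 / (4 * real m * real n) * consensus_err n (gt_x n m W G \<alpha> x0 (\<lambda>t i. tau t i \<omega>) (\<lambda>t i. s t i \<omega>) k)"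
proof -
  interpret gts n m W G \<alpha> x0 M tau s k
    by (rule gts.intro) (use n m prob indep unif_tau unif_s in auto)
  have W: "\<And>r. r < n \<Longrightarrow> (\<Sum>i<n. W i r) = 1"
    using Wds unfolding doubly_stochastic_def by auto
  have al: "\<alpha>\<^sup>2 * L\<^sup>2 \<le> real n / (8 * real m)"
  proof -
    have mpos: "real m > 0" using m by simp
    have d: "sqrt (8 * real m) * L > 0" using mpos L by simp
    have "\<alpha> * (sqrt (8 * real m) * L) \<le> sqrt (real n)"
      using alpha(2) d by (simp add: pos_le_divide_eq)
    then have "(\<alpha> * (sqrt (8 * real m) * L))\<^sup>2 \<le> (sqrt (real n))\<^sup>2"
      by (rule power_mono) (use alpha(1) d in simp)
    then have "\<alpha>\<^sup>2 * (8 * real m) * L\<^sup>2 \<le> real n"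
      using mpos by (simp add: power_mult_distrib)
    then show ?thesis using mpos by (simp add: field_simps)
  qed
  have "AE \<omega> in M. real_cond_exp M F Y \<omega>
     \<le> 2 * gt_t n m W G \<alpha> x0 (\<lambda>t i. tau t i \<omega>) (\<lambda>t i. s t i \<omega>) k
       + 3 * \<alpha>\<^sup>2 * (norm (avg_grad n m G (gt_x n m W G \<alpha> x0 (\<lambda>t i. tau t i \<omega>) (\<lambda>t i. s t i \<omega>) k)))\<^sup>2
       + 9 / (4 * real m * real n) * consensus_err n (gt_x n m W G \<alpha> x0 (\<lambda>t i. tau t i \<omega>) (\<lambda>t i. s t i \<omega>) k)"
    by (rule main_loc[OF W smooth L al])
  moreover have "Y = (\<lambda>\<omega>. gt_t n m W G \<alpha> x0 (\<lambda>t i. tau t i \<omega>) (\<lambda>t i. s t i \<omega>) (Suc k))"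
    by (rule ext) (simp add: Y_def)
  ultimately show ?thesis by simp
qed


end
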